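(* Let $F_0,F_1$ be pure contexts, $t$ a term, and $k,x,y$ variables with $x\notin\mathrm{fv}(F_0)\cup\mathrm{fv}(F_1)$ and $y\notin\mathrm{fv}(F_1)$. Then $\langle t\{\lambda x.\langle F_1[F_0[x]]\rangle/k\}\rangle \approx \langle t\{\lambda x.\langle (\lambda y.F_1[y])\,F_0[x]\rangle/k\}\rangle$.
   Context: The calculus $\lambda_{\mathcal S}$. Terms: $t ::= x \mid \lambda x.t \mid t\,t \mid \mathcal{S}k.t \mid \langle t\rangle$ (shift and reset); values: $v ::= \lambda x.t \mid x$. $\lambda x.t$ binds $x$, $\mathcal{S}k.t$ binds $k$; terms up to $\alpha$-conversion; $\mathrm{fv}$ free variables; capture-avoiding substitution $t\{v/x\}$. Pure contexts $F ::= [\,] \mid v\,F \mid F\,t$; evaluation contexts $E ::= [\,] \mid v\,E \mid E\,t \mid \langle E\rangle$. Reduction: $E[(\lambda x.t)\,v] \to E[t\{v/x\}]$; $E[\langle F[\mathcal{S}k.t]\rangle] \to E[\langle t\{\lambda x.\langle F[x]\rangle/k\}\rangle]$ ($x\notin\mathrm{fv}(F)$); $E[\langle v\rangle]\to E[v]$. $t\Downarrow t'$ iff $t\to^*t'$ and $t'$ irreducible. Normal forms: values, control stuck terms $F[\mathcal{S}k.t]$, open stuck terms $E[x\,v]$. Fresh: not free in the terms/contexts considered. Refined normal form bisimilarity $\approx$: for a relation $\mathcal R$ on terms, $E_0\mathrel{\mathcal R}E_1$ iff either $E_0=E_0'[\langle F_0\rangle]$, $E_1=E_1'[\langle F_1\rangle]$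 ($F_i$ pure) with $E_0'[x]\mathrel{\mathcal R}E_1'[x]$ and $\langle F_0[x]\rangle\mathrel{\mathcal R}\langle F_1[x]\rangle$ ($x$ fresh), or $E_0=F_0$, $E_1=F_1$ pure with $F_0[x]\mathrel{\mathcal R}F_1[x]$ ($x$ fresh). $v\mathbin{@}y$ is $x\,y$ if $v=x$, $t\{y/x\}$ if $v=\lambda x.t$. $\mathcal R^{\mathrm{rnf}}$ on normal forms: $v_0\mathrel{\mathcal R^{\mathrm{rnf}}}v_1$ if $v_0\mathbin{@}x\mathrel{\mathcal R}v_1\mathbin{@}x$ ($x$ fresh); $E_0[x\,v_0]\mathrel{\mathcal R^{\mathrm{rnf}}}E_1[x\,v_1]$ if $E_0\mathrel{\mathcal R}E_1$ and $v_0\mathrel{\mathcal R^{\mathrm{rnf}}}v_1$; $F_0[\mathcal{S}k.t_0]\mathrel{\mathcal R^{\mathrm{rnf}}}F_1[\mathcal{S}k.t_1]$ if $\langle t_0\{\lambda x.\langle k'\,F_0[x]\rangle/k\}\rangle\mathrel{\mathcal R}\langle t_1\{\lambda x.\langle k'\,F_1[x]\rangle/k\}\rangle$ for fresh $k',x$. $\mathcal R$ is a refined simulation if $t_0\mathrel{\mathcal R}t_1$ and $t_0\Downarrow t_0'$ imply $t_1\Downarrow t_1'$ with $t_0'\mathrel{\mathcal R^{\mathrm{rnf}}}t_1'$; a refined bisimulation if $\mathcal R$ and $\mathcal R^{-1}$ are refined simulations; $\approx$ is the largest refined normal form bisimulation. *)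

theory Defs
  imports Main
begin

type_synonym var = nat

datatype trm = Var var | Lam var trm | App trm trm | Shift var trm | Reset trm

primrec fv :: "trm \<Rightarrow> var set" where
  "fv (Var x) = {x}"
| "fv (Lam x t) = fv t - {x}"
| "fv (App s t) = fv s \<union> fv t"
| "fv (Shift k t) = fv t - {k}"
| "fv (Reset t) = fv t"

definition swap_var :: "var \<Rightarrow> var \<Rightarrow> var \<Rightarrow> var" where
  "swap_var a b z = (if z = a then b else if z = b then a else z)"

primrec swp :: "var \<Rightarrow> var \<Rightarrow> trm \<Rightarrow> trm" where
  "swp a b (Var x) = Var (swap_var a b x)"
| "swp a b (Lam x t) = Lam (swap_var a b x) (swp a b t)"
| "swp a b (App s t) = App (swp a b s) (swp a b t)"
| "swp a b (Shift k t) = Shift (swap_var a b k) (swp a b t)"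
| "swp a b (Reset t) = Reset (swp a b t)"

lemma size_swp [simp]: "size (swp a b t) = size t"
  by (induction t) auto

definition fresh :: "var set \<Rightarrow> var" where
  "fresh S = Suc (Max (insert 0 S))"

function subst :: "trm \<Rightarrow> trm \<Rightarrow> var \<Rightarrow> trm" where
  "subst (Var y) u x = (if y = x then u else Var y)"
| "subst (App a b) u x = App (subst a u x) (subst b u x)"
| "subst (Reset a) u x = Reset (subst a u x)"
| "subst (Lam y a) u x = (if y = x then Lam y a else
     (let z = fresh (fv u \<union> fv a \<union> {x, y}) in Lam z (subst (swp y z a) u x)))"
| "subst (Shift y a) u x = (if y = x then Shift y a else
     (let z = fresh (fv u \<union> fv a \<union> {x, y}) in Shift z (subst (swp y z a) u x)))"
  by pat_completeness auto
termination
  by (relation "measure (\<lambda>(a, u, x). size a)") auto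

primrec is_value :: "trm \<Rightarrow> bool" where
  "is_value (Var x) = True"
| "is_value (Lam x t) = True"
| "is_value (App s t) = False"
| "is_value (Shift k t) = False"
| "is_value (Reset t) = False"

datatype ctx = Hole | CArg trm ctx | CFun ctx trm | CReset ctx

primrec plug :: "ctx \<Rightarrow> trm \<Rightarrow> trm" where
  "plug Hole s = s"
| "plug (CArg v E) s = App v (plug E s)"
| "plug (CFun E t) s = App (plug E s) t"
| "plug (CReset E) s = Reset (plug E s)"

primrec fv_ctx :: "ctx \<Rightarrow> var set" where
  "fv_ctx Hole = {}"
| "fv_ctx (CArg v E) = fv v \<union> fv_ctx E"
| "fv_ctx (CFun E t) = fv_ctx E \<union> fv t"
| "fv_ctx (CReset E) = fv_ctx E"

primrec is_pure :: "ctx \<Rightarrow> bool" where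
  "is_pure Hole = True"
| "is_pure (CArg v E) = (is_value v \<and> is_pure E)"
| "is_pure (CFun E t) = is_pure E"
| "is_pure (CReset E) = False"

primrec is_ectx :: "ctx \<Rightarrow> bool" where
  "is_ectx Hole = True"
| "is_ectx (CArg v E) = (is_value v \<and> is_ectx E)"
| "is_ectx (CFun E t) = is_ectx E"
| "is_ectx (CReset E) = is_ectx E"

primrec ctx_comp :: "ctx \<Rightarrow> ctx \<Rightarrow> ctx" where
  "ctx_comp Hole E' = E'"
| "ctx_comp (CArg v E) E' = CArg v (ctx_comp E E')"
| "ctx_comp (CFun E t) E' = CFun (ctx_comp E E') t"
| "ctx_comp (CReset E) E' = CReset (ctx_comp E E')"

inductive step :: "trm \<Rightarrow> trm \<Rightarrow> bool" where
  beta: "is_ectx E \<Longrightarrow> is_value v \<Longrightarrow>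
     step (plug E (App (Lam x t) v)) (plug E (subst t v x))"
| shift: "is_ectx E \<Longrightarrow> is_pure F \<Longrightarrow> x \<notin> fv_ctx F \<Longrightarrow>
     step (plug E (Reset (plug F (Shift k t))))
          (plug E (Reset (subst t (Lam x (Reset (plug F (Var x)))) k)))"
| reset: "is_ectx E \<Longrightarrow> is_value v \<Longrightarrow> step (plug E (Reset v)) (plug E v)"

definition irreducible :: "trm \<Rightarrow> bool" where
  "irreducible t \<longleftrightarrow> \<not> (\<exists>t'. step t t')"

definition evals :: "trm \<Rightarrow> trm \<Rightarrow> bool" where
  "evals t t' \<longleftrightarrow> step\<^sup>*\<^sup>* t t' \<and> irreducible t'"

definition ctx_rel :: "(trm \<Rightarrow> trm \<Rightarrow> bool) \<Rightarrow> ctx \<Rightarrow> ctx \<Rightarrow> bool" where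
  "ctx_rel R E0 E1 \<longleftrightarrow>
     (\<exists>E0' F0 E1' F1. E0 = ctx_comp E0' (CReset F0) \<and> E1 = ctx_comp E1' (CReset F1) \<and>
        is_ectx E0' \<and> is_ectx E1' \<and> is_pure F0 \<and> is_pure F1 \<and>
        (\<forall>x. x \<notin> fv_ctx E0 \<union> fv_ctx E1 \<longrightarrow>
           R (plug E0' (Var x)) (plug E1' (Var x)) \<and>
           R (Reset (plug F0 (Var x))) (Reset (plug F1 (Var x)))))
   \<or> (is_pure E0 \<and> is_pure E1 \<and>
        (\<forall>x. x \<notin> fv_ctx E0 \<union> fv_ctx E1 \<longrightarrow> R (plug E0 (Var x)) (plug E1 (Var x))))"

fun vapp :: "trm \<Rightarrow> var \<Rightarrow> trm" where
  "vapp (Var x) y = App (Var x) (Var y)"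
| "vapp (Lam x t) y = subst t (Var y) x"
| "vapp t y = undefined"

definition val_rel :: "(trm \<Rightarrow> trm \<Rightarrow> bool) \<Rightarrow> trm \<Rightarrow> trm \<Rightarrow> bool" where
  "val_rel R v0 v1 \<longleftrightarrow> is_value v0 \<and> is_value v1 \<and>
     (\<forall>x. x \<notin> fv v0 \<union> fv v1 \<longrightarrow> R (vapp v0 x) (vapp v1 x))"

definition rnf :: "(trm \<Rightarrow> trm \<Rightarrow> bool) \<Rightarrow> trm \<Rightarrow> trm \<Rightarrow> bool" where
  "rnf R t0 t1 \<longleftrightarrow>
     val_rel R t0 t1
   \<or> (\<exists>E0 E1 z v0 v1. is_ectx E0 \<and> is_ectx E1 \<and>
        t0 = plug E0 (App (Var z) v0) \<and> t1 = plug E1 (App (Var z) v1) \<and>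
        ctx_rel R E0 E1 \<and> val_rel R v0 v1)
   \<or> (\<exists>F0 F1 k0 k1 s0 s1. is_pure F0 \<and> is_pure F1 \<and>
        t0 = plug F0 (Shift k0 s0) \<and> t1 = plug F1 (Shift k1 s1) \<and>
        (\<forall>k' x. k' \<noteq> x \<longrightarrow> k' \<notin> fv t0 \<union> fv t1 \<longrightarrow> x \<notin> fv t0 \<union> fv t1 \<longrightarrow>
           R (Reset (subst s0 (Lam x (Reset (App (Var k') (plug F0 (Var x))))) k0))
             (Reset (subst s1 (Lam x (Reset (App (Var k') (plug F1 (Var x))))) k1))))"

definition refined_sim :: "(trm \<Rightarrow> trm \<Rightarrow> bool) \<Rightarrow> bool" where
  "refined_sim R \<longleftrightarrow> (\<forall>t0 t1 t0'. R t0 t1 \<longrightarrow> evals t0 t0' \<longrightarrow>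
      (\<exists>t1'. evals t1 t1' \<and> rnf R t0' t1'))"

definition refined_bisim :: "(trm \<Rightarrow> trm \<Rightarrow> bool) \<Rightarrow> bool" where
  "refined_bisim R \<longleftrightarrow> refined_sim R \<and> refined_sim (conversep R)"

definition rnf_bisimilar :: "trm \<Rightarrow> trm \<Rightarrow> bool" where
  "rnf_bisimilar t0 t1 \<longleftrightarrow> (\<exists>R. refined_bisim R \<and> R t0 t1)"

end

theory Submission
  imports Defs
begin


datatype dt = BV nat | FV var | DLam dt | DApp dt dt | DShift dt | DReset dt

primrec opn :: "nat \<Rightarrow> dt \<Rightarrow> dt \<Rightarrow> dt" where
  "opn k u (BV i) = (if i = k then u else BV i)"
| "opn k u (FV x) = FV x"
| "opn k u (DLam b) = DLam (opn (Suc k) u b)"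
| "opn k u (DApp a b) = DApp (opn k u a) (opn k u b)"
| "opn k u (DShift b) = DShift (opn (Suc k) u b)"
| "opn k u (DReset a) = DReset (opn k u a)"

primrec cls :: "nat \<Rightarrow> var \<Rightarrow> dt \<Rightarrow> dt" where
  "cls k x (BV i) = BV i"
| "cls k x (FV y) = (if y = x then BV k else FV y)"
| "cls k x (DLam b) = DLam (cls (Suc k) x b)"
| "cls k x (DApp a b) = DApp (cls k x a) (cls k x b)"
| "cls k x (DShift b) = DShift (cls (Suc k) x b)"
| "cls k x (DReset a) = DReset (cls k x a)"

primrec lcat :: "nat \<Rightarrow> dt \<Rightarrow> bool" where
  "lcat k (BV i) = (i < k)"
| "lcat k (FV y) = True"
| "lcat k (DLam b) = lcat (Suc k) b"
| "lcat k (DApp a b) = (lcat k a \<and> lcat k b)"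
| "lcat k (DShift b) = lcat (Suc k) b"
| "lcat k (DReset a) = lcat k a"

primrec fvd :: "dt \<Rightarrow> var set" where
  "fvd (BV i) = {}"
| "fvd (FV y) = {y}"
| "fvd (DLam b) = fvd b"
| "fvd (DApp a b) = fvd a \<union> fvd b"
| "fvd (DShift b) = fvd b"
| "fvd (DReset a) = fvd a"

primrec msubst :: "(var \<Rightarrow> dt) \<Rightarrow> dt \<Rightarrow> dt" where
  "msubst s (BV i) = BV i"
| "msubst s (FV y) = s y"
| "msubst s (DLam b) = DLam (msubst s b)"
| "msubst s (DApp a b) = DApp (msubst s a) (msubst s b)"
| "msubst s (DShift b) = DShift (msubst s b)"
| "msubst s (DReset a) = DReset (msubst s a)"

primrec dswp :: "var \<Rightarrow> var \<Rightarrow> dt \<Rightarrow> dt" where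
  "dswp a b (BV i) = BV i"
| "dswp a b (FV y) = FV (swap_var a b y)"
| "dswp a b (DLam t) = DLam (dswp a b t)"
| "dswp a b (DApp s t) = DApp (dswp a b s) (dswp a b t)"
| "dswp a b (DShift t) = DShift (dswp a b t)"
| "dswp a b (DReset t) = DReset (dswp a b t)"

primrec conv :: "trm \<Rightarrow> dt" where
  "conv (Var x) = FV x"
| "conv (Lam x t) = DLam (cls 0 x (conv t))"
| "conv (App s t) = DApp (conv s) (conv t)"
| "conv (Shift k t) = DShift (cls 0 k (conv t))"
| "conv (Reset t) = DReset (conv t)"

primrec dval :: "dt \<Rightarrow> bool" where
  "dval (BV i) = False"
| "dval (FV x) = True"
| "dval (DLam t) = True"
| "dval (DApp s t) = False"
| "dval (DShift t) = False"
| "dval (DReset t) = False"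

abbreviation lc where "lc \<equiv> lcat 0"

lemma lcat_mono: "lcat k d \<Longrightarrow> k \<le> m \<Longrightarrow> lcat m d"
  by (induction d arbitrary: k m) fastforce+

lemma opn_lcat: "lcat k d \<Longrightarrow> opn k u d = d"
  by (induction d arbitrary: k) auto

lemma lc_opn_lcat: "lc d \<Longrightarrow> opn k u d = d"
  using opn_lcat lcat_mono by blast

lemma lcat_opn: "lcat (Suc k) b \<Longrightarrow> lc u \<Longrightarrow> lcat k (opn k u b)"
  by (induction b arbitrary: k) (auto intro: lcat_mono)

lemma lcat_opn_rev: "lcat k (opn k u b) \<Longrightarrow> lcat (Suc k) b"
  by (induction b arbitrary: k) (auto split: if_splits)

lemma size_opn_FV[simp]: "size (opn k (FV z) b) = size b"
  by (induction b arbitrary: k) auto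

lemma fvd_opn: "fvd (opn k u b) \<subseteq> fvd u \<union> fvd b"
  by (induction b arbitrary: k) auto

lemma fvd_opn2: "fvd b \<subseteq> fvd (opn k u b)"
  by (induction b arbitrary: k) auto

lemma finite_fvd[simp]: "finite (fvd d)"
  by (induction d) auto

definition lcs :: "(var \<Rightarrow> dt) \<Rightarrow> bool" where "lcs s \<longleftrightarrow> (\<forall>x. lc (s x))"

lemma msubst_opn: "lcs s \<Longrightarrow> msubst s (opn k u b) = opn k (msubst s u) (msubst s b)"
  by (induction b arbitrary: k) (auto simp: lcs_def lc_opn_lcat)

lemma msubst_upd_notin: "w \<notin> fvd b \<Longrightarrow> msubst (s(w:=t)) b = msubst s b"
  by (induction b) auto

lemma msubst_FV[simp]: "msubst FV d = d"
  by (induction d) auto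

lemma msubst_FV_notin: "x \<notin> fvd d \<Longrightarrow> msubst (FV(x:=U)) d = d"
  using msubst_upd_notin[of x d FV U] by simp

lemma lcat_msubst: "lcat k d \<Longrightarrow> lcs s \<Longrightarrow> lcat k (msubst s d)"
  by (induction d arbitrary: k) (auto simp: lcs_def intro: lcat_mono)

lemma opn_cls: "lcat k T \<Longrightarrow> lc U \<Longrightarrow> opn k U (cls k x T) = msubst (FV(x:=U)) T"
  by (induction T arbitrary: k) (auto simp: lc_opn_lcat)

lemma lcat_cls: "lcat k d \<Longrightarrow> lcat (Suc k) (cls k x d)"
  by (induction d arbitrary: k) auto

lemma fvd_cls[simp]: "fvd (cls k x d) = fvd d - {x}"
  by (induction d arbitrary: k) auto

lemma cls_notin: "x \<notin> fvd d \<Longrightarrow> cls k x d = d"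
  by (induction d arbitrary: k) auto

lemma cls_dswp: "z \<notin> fvd A \<Longrightarrow> cls k z (dswp y z A) = cls k y A"
  by (induction A arbitrary: k) (auto simp: swap_var_def)

lemma dswp_cls: "dswp a b (cls k x d) = cls k (swap_var a b x) (dswp a b d)"
  by (induction d arbitrary: k) (auto simp: swap_var_def)

lemma conv_swp: "conv (swp a b t) = dswp a b (conv t)"
  by (induction t) (auto simp: dswp_cls)

lemma fvd_conv[simp]: "fvd (conv t) = fv t"
  by (induction t) auto

lemma lc_conv[simp]: "lc (conv t)"
  by (induction t) (auto intro: lcat_cls)

lemma cls_msubst: "s z = FV z \<Longrightarrow> (\<forall>y. y \<noteq> z \<longrightarrow> z \<notin> fvd (s y) \<and> lc (s y)) \<Longrightarrow>
   cls k z (msubst s D) = msubst s (cls k z D)"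
  by (induction D arbitrary: k) (auto simp: cls_notin lc_opn_lcat)

lemma fresh_notin: "finite S \<Longrightarrow> fresh S \<notin> S"
proof
  assume "finite S" "fresh S \<in> S"
  then have "fresh S \<le> Max (insert 0 S)" by simp
  then show False by (simp add: fresh_def)
qed

lemma finite_fv[simp]: "finite (fv t)"
  by (induction t) auto

lemma conv_subst: "conv (subst t u x) = msubst (FV(x := conv u)) (conv t)"
proof (induction t u x rule: subst.induct)
  case (4 y a u x)
  show ?case
  proof (cases "y = x")
    case True
    then show ?thesis
      using msubst_FV_notin[of x "cls 0 x (conv a)" "conv u"] by (simp add: fun_upd_def)
  next
    case False
    define z where "z = fresh (fv u \<union> fv a \<union> {x, y})"
    have z: "z \<notin> fv u \<union> fv a \<union> {x, y}" unfolding z_def by (rule fresh_notin) simp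
    have eq: "subst (Lam y a) u x = Lam z (subst (swp y z a) u x)"
      using False by (simp add: Let_def z_def)
    have "conv (subst (Lam y a) u x) = DLam (cls 0 z (msubst (FV(x := conv u)) (dswp y z (conv a))))"
      unfolding eq using 4(1)[OF False z_def] by (simp add: conv_swp del: fun_upd_apply)
    also have "\<dots> = DLam (msubst (FV(x := conv u)) (cls 0 z (dswp y z (conv a))))"
      using z by (subst cls_msubst) auto
    also have "\<dots> = DLam (msubst (FV(x := conv u)) (cls 0 y (conv a)))"
      using z by (simp add: cls_dswp)
    finally show ?thesis by (simp add: fun_upd_def)
  qed
next
  case (5 y a u x)
  show ?case
  proof (cases "y = x")
    case True
    then show ?thesis
      using msubst_FV_notin[of x "cls 0 x (conv a)" "conv u"] by (simp add: fun_upd_def)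
  next
    case False
    define z where "z = fresh (fv u \<union> fv a \<union> {x, y})"
    have z: "z \<notin> fv u \<union> fv a \<union> {x, y}" unfolding z_def by (rule fresh_notin) simp
    have eq: "subst (Shift y a) u x = Shift z (subst (swp y z a) u x)"
      using False by (simp add: Let_def z_def)
    have "conv (subst (Shift y a) u x) = DShift (cls 0 z (msubst (FV(x := conv u)) (dswp y z (conv a))))"
      unfolding eq using 5(1)[OF False z_def] by (simp add: conv_swp del: fun_upd_apply)
    also have "\<dots> = DShift (msubst (FV(x := conv u)) (cls 0 z (dswp y z (conv a))))"
      using z by (subst cls_msubst) auto
    also have "\<dots> = DShift (msubst (FV(x := conv u)) (cls 0 y (conv a)))"
      using z by (simp add: cls_dswp)
    finally show ?thesis by (simp add: fun_upd_def)
  qed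
qed auto

lemma conv_subst_opn: "conv (subst t u x) = opn 0 (conv u) (cls 0 x (conv t))"
  by (simp add: conv_subst opn_cls)



datatype dctx = DHole | DCArg dt dctx | DCFun dctx dt | DCReset dctx

primrec dplug :: "dctx \<Rightarrow> dt \<Rightarrow> dt" where
  "dplug DHole s = s"
| "dplug (DCArg v E) s = DApp v (dplug E s)"
| "dplug (DCFun E t) s = DApp (dplug E s) t"
| "dplug (DCReset E) s = DReset (dplug E s)"

primrec dcomp :: "dctx \<Rightarrow> dctx \<Rightarrow> dctx" where
  "dcomp DHole E' = E'"
| "dcomp (DCArg v E) E' = DCArg v (dcomp E E')"
| "dcomp (DCFun E t) E' = DCFun (dcomp E E') t"
| "dcomp (DCReset E) E' = DCReset (dcomp E E')"

primrec dpure :: "dctx \<Rightarrow> bool" where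
  "dpure DHole = True"
| "dpure (DCArg v E) = (dval v \<and> dpure E)"
| "dpure (DCFun E t) = dpure E"
| "dpure (DCReset E) = False"

primrec dectx :: "dctx \<Rightarrow> bool" where
  "dectx DHole = True"
| "dectx (DCArg v E) = (dval v \<and> dectx E)"
| "dectx (DCFun E t) = dectx E"
| "dectx (DCReset E) = dectx E"

primrec lcc :: "dctx \<Rightarrow> bool" where
  "lcc DHole = True"
| "lcc (DCArg v E) = (lc v \<and> lcc E)"
| "lcc (DCFun E t) = (lcc E \<and> lc t)"
| "lcc (DCReset E) = lcc E"

primrec fvc :: "dctx \<Rightarrow> var set" where
  "fvc DHole = {}"
| "fvc (DCArg v E) = fvd v \<union> fvc E"
| "fvc (DCFun E t) = fvc E \<union> fvd t"
| "fvc (DCReset E) = fvc E"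

primrec cconv :: "ctx \<Rightarrow> dctx" where
  "cconv Hole = DHole"
| "cconv (CArg v E) = DCArg (conv v) (cconv E)"
| "cconv (CFun E t) = DCFun (cconv E) (conv t)"
| "cconv (CReset E) = DCReset (cconv E)"

lemma conv_plug[simp]: "conv (plug E t) = dplug (cconv E) (conv t)"
  by (induction E) auto

lemma dval_conv[simp]: "dval (conv t) = is_value t"
  by (cases t) auto

lemma dpure_cconv[simp]: "dpure (cconv E) = is_pure E"
  by (induction E) auto

lemma dectx_cconv[simp]: "dectx (cconv E) = is_ectx E"
  by (induction E) auto

lemma fvc_cconv[simp]: "fvc (cconv E) = fv_ctx E"
  by (induction E) auto

lemma lcc_cconv[simp]: "lcc (cconv E)"
  by (induction E) auto

lemma opn_dplug: "lcc G \<Longrightarrow> opn k u (dplug G s) = dplug G (opn k u s)"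
  by (induction G) (auto simp: lc_opn_lcat)

lemma cls_dplug: "x \<notin> fvc F \<Longrightarrow> cls k x (dplug F s) = dplug F (cls k x s)"
  by (induction F) (auto simp: cls_notin)

lemma dplug_dcomp[simp]: "dplug (dcomp A B) s = dplug A (dplug B s)"
  by (induction A) auto

lemma plug_comp[simp]: "plug (ctx_comp A B) s = plug A (plug B s)"
  by (induction A) auto

lemma ectx_comp: "is_ectx A \<Longrightarrow> is_ectx B \<Longrightarrow> is_ectx (ctx_comp A B)"
  by (induction A) auto

lemma dectx_comp: "dectx A \<Longrightarrow> dectx B \<Longrightarrow> dectx (dcomp A B)"
  by (induction A) auto

lemma dpure_comp: "dpure A \<Longrightarrow> dpure B \<Longrightarrow> dpure (dcomp A B)"
  by (induction A) auto

lemma dpure_dectx: "dpure A \<Longrightarrow> dectx A"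
  by (induction A) auto

lemma finite_fv_ctx[simp]: "finite (fv_ctx E)"
  by (induction E) auto

inductive dstep :: "dt \<Rightarrow> dt \<Rightarrow> bool" where
  dbeta: "dval v \<Longrightarrow> dstep (DApp (DLam b) v) (opn 0 v b)"
| dreset: "dval v \<Longrightarrow> dstep (DReset v) v"
| dshift: "dpure F \<Longrightarrow> dstep (DReset (dplug F (DShift b)))
            (DReset (opn 0 (DLam (DReset (dplug F (BV 0)))) b))"
| dappL: "dstep a a' \<Longrightarrow> dstep (DApp a c) (DApp a' c)"
| dappR: "dval v \<Longrightarrow> dstep c c' \<Longrightarrow> dstep (DApp v c) (DApp v c')"
| dres: "dstep a a' \<Longrightarrow> dstep (DReset a) (DReset a')"

lemma dstep_ctx: "dectx E \<Longrightarrow> dstep a a' \<Longrightarrow> dstep (dplug E a) (dplug E a')"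
  by (induction E) (auto intro: dstep.intros)

lemma step_ctx: "step s s' \<Longrightarrow> is_ectx E0 \<Longrightarrow> step (plug E0 s) (plug E0 s')"
proof (induction rule: step.induct)
  case (beta E v x t)
  then show ?case using step.beta[of "ctx_comp E0 E" v x t] by (simp add: ectx_comp)
next
  case (shift E F x k t)
  then show ?case using step.shift[of "ctx_comp E0 E" F x k t] by (simp add: ectx_comp)
next
  case (reset E v)
  then show ?case using step.reset[of "ctx_comp E0 E" v] by (simp add: ectx_comp)
qed

lemma conv_shift_cont:
  assumes "x \<notin> fv_ctx F"
  shows "conv (Lam x (Reset (plug F (Var x)))) = DLam (DReset (dplug (cconv F) (BV 0)))"
  using assms by (simp add: cls_dplug)

lemma proj: "step t t' \<Longrightarrow> dstep (conv t) (conv t')"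
proof (induction rule: step.induct)
  case (beta E v x t)
  then show ?case
    using dstep_ctx[of "cconv E", OF _ dbeta[of "conv v" "cls 0 x (conv t)"]]
    by (simp add: conv_subst_opn)
next
  case (shift E F x k t)
  have c: "conv (Reset (subst t (Lam x (Reset (plug F (Var x)))) k)) =
     DReset (opn 0 (DLam (DReset (dplug (cconv F) (BV 0)))) (cls 0 k (conv t)))"
    by (simp only: conv.simps(5) conv_subst_opn conv_shift_cont[OF shift(3)])
  show ?case unfolding conv_plug c
    using shift dstep_ctx[of "cconv E", OF _ dshift[of "cconv F" "cls 0 k (conv t)"]] by simp
next
  case (reset E v)
  then show ?case using dstep_ctx[of "cconv E", OF _ dreset[of "conv v"]] by simp
qed

lemma conv_FV: "conv t = FV z \<Longrightarrow> t = Var z"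
  by (cases t) auto
lemma conv_DLam: "conv t = DLam B \<Longrightarrow> \<exists>y b. t = Lam y b \<and> B = cls 0 y (conv b)"
  by (cases t) auto
lemma conv_DShift: "conv t = DShift B \<Longrightarrow> \<exists>y b. t = Shift y b \<and> B = cls 0 y (conv b)"
  by (cases t) auto
lemma conv_DApp: "conv t = DApp A B \<Longrightarrow> \<exists>a b. t = App a b \<and> conv a = A \<and> conv b = B"
  by (cases t) auto
lemma conv_DReset: "conv t = DReset A \<Longrightarrow> \<exists>a. t = Reset a \<and> conv a = A"
  by (cases t) auto

lemma decomp: "conv t = dplug E d \<Longrightarrow> \<exists>Er r. t = plug Er r \<and> cconv Er = E \<and> conv r = d"
proof (induction E arbitrary: t)
  case DHole
  then show ?case by (intro exI[of _ Hole]) auto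
next
  case (DCArg v E)
  then obtain a b where ab: "t = App a b" "conv a = v" "conv b = dplug E d"
    using conv_DApp by fastforce
  with DCArg.IH obtain Er r where "b = plug Er r" "cconv Er = E" "conv r = d" by blast
  then show ?case using ab by (intro exI[of _ "CArg a Er"]) auto
next
  case (DCFun E c)
  then obtain a b where ab: "t = App a b" "conv a = dplug E d" "conv b = c"
    using conv_DApp by fastforce
  with DCFun.IH obtain Er r where "a = plug Er r" "cconv Er = E" "conv r = d" by blast
  then show ?case using ab by (intro exI[of _ "CFun Er b"]) auto
next
  case (DCReset E)
  then obtain a where ab: "t = Reset a" "conv a = dplug E d"
    using conv_DReset by fastforce
  with DCReset.IH obtain Er r where "a = plug Er r" "cconv Er = E" "conv r = d" by blast
  then show ?case using ab by (intro exI[of _ "CReset Er"]) auto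
qed

lemma lift: "dstep (conv t) d \<Longrightarrow> \<exists>t'. step t t' \<and> conv t' = d"
proof (induction "conv t" d arbitrary: t rule: dstep.induct)
  case (dbeta v b)
  then obtain a c where ac: "t = App a c" "conv a = DLam b" "conv c = v" using conv_DApp by metis
  then obtain y e where ye: "a = Lam y e" "b = cls 0 y (conv e)" using conv_DLam by blast
  have "is_value c" using dbeta(1) ac(3) by (metis dval_conv)
  then have "step t (subst e c y)" using step.beta[of Hole c y e] ac ye by simp
  moreover have "conv (subst e c y) = opn 0 v b" using ac ye by (simp add: conv_subst_opn)
  ultimately show ?case by blast
next
  case (dreset v)
  then obtain a where "t = Reset a" "conv a = v" using conv_DReset by metis
  then show ?case using step.reset[of Hole a] dreset by auto
next
  case (dshift F b)
  then obtain a where a: "t = Reset a" "conv a = dplug F (DShift b)" using conv_DReset by metis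
  then obtain Fr r where Fr: "a = plug Fr r" "cconv Fr = F" "conv r = DShift b" using decomp by blast
  then obtain k e where ke: "r = Shift k e" "b = cls 0 k (conv e)" using conv_DShift by blast
  define x where "x = fresh (fv_ctx Fr)"
  have x: "x \<notin> fv_ctx Fr" unfolding x_def by (rule fresh_notin) simp
  have "is_pure Fr" using dshift(1) Fr(2) by (metis dpure_cconv)
  then have "step t (Reset (subst e (Lam x (Reset (plug Fr (Var x)))) k))"
    using step.shift[of Hole Fr x k e] a Fr ke x by simp
  moreover have "conv (Reset (subst e (Lam x (Reset (plug Fr (Var x)))) k)) =
      DReset (opn 0 (DLam (DReset (dplug F (BV 0)))) b)"
    using ke Fr by (simp only: conv.simps(5) conv_subst_opn conv_shift_cont[OF x])
  ultimately show ?case by blast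
next
  case (dappL a a' c)
  then obtain p q where pq: "t = App p q" "conv p = a" "conv q = c" using conv_DApp by metis
  with dappL obtain p' where "step p p'" "conv p' = a'" by blast
  then show ?case using pq step_ctx[of p p' "CFun Hole q"] by (intro exI[of _ "App p' q"]) auto
next
  case (dappR v c c')
  then obtain p q where pq: "t = App p q" "conv p = v" "conv q = c" using conv_DApp by metis
  with dappR obtain q' where "step q q'" "conv q' = c'" by blast
  then show ?case using pq dappR step_ctx[of q q' "CArg p Hole"] by (intro exI[of _ "App p q'"]) auto
next
  case (dres a a')
  then obtain p where pq: "t = Reset p" "conv p = a" using conv_DReset by metis
  with dres obtain p' where "step p p'" "conv p' = a'" by blast
  then show ?case using pq step_ctx[of p p' "CReset Hole"] by (intro exI[of _ "Reset p'"]) auto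
qed

lemma lift_steps: "dstep\<^sup>*\<^sup>* (conv t) d \<Longrightarrow> \<exists>t'. step\<^sup>*\<^sup>* t t' \<and> conv t' = d"
proof (induction rule: rtranclp_induct)
  case base then show ?case by blast
next
  case (step y z)
  then obtain t' where "step\<^sup>*\<^sup>* t t'" "conv t' = y" by blast
  with step lift[of t' z] show ?case by (meson rtranclp.rtrancl_into_rtrancl)
qed

lemma proj_steps: "step\<^sup>*\<^sup>* t t' \<Longrightarrow> dstep\<^sup>*\<^sup>* (conv t) (conv t')"
  by (induction rule: rtranclp_induct) (auto intro: proj rtranclp.rtrancl_into_rtrancl)

definition dirr :: "dt \<Rightarrow> bool" where "dirr d \<longleftrightarrow> \<not> (\<exists>d'. dstep d d')"

lemma irr_conv: "irreducible t \<longleftrightarrow> dirr (conv t)"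
  unfolding irreducible_def dirr_def using proj lift by blast



inductive Sim :: "dt \<Rightarrow> dt \<Rightarrow> bool" and CSim :: "dctx \<Rightarrow> dctx \<Rightarrow> bool" where
  S_fv: "Sim (FV x) (FV x)"
| S_lam: "(\<And>z. Sim (opn 0 (FV z) b0) (opn 0 (FV z) b1)) \<Longrightarrow> Sim (DLam b0) (DLam b1)"
| S_app: "Sim a a' \<Longrightarrow> Sim c c' \<Longrightarrow> Sim (DApp a c) (DApp a' c')"
| S_shift: "(\<And>z. Sim (opn 0 (FV z) b0) (opn 0 (FV z) b1)) \<Longrightarrow> Sim (DShift b0) (DShift b1)"
| S_reset: "Sim a a' \<Longrightarrow> Sim (DReset a) (DReset a')"
| S_base: "CSim G G' \<Longrightarrow> Sim u u' \<Longrightarrow>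
    Sim (DReset (dplug G u)) (DReset (DApp (DLam (dplug G' (BV 0))) u'))"
| C_hole: "CSim DHole DHole"
| C_arg: "Sim v v' \<Longrightarrow> dval v \<Longrightarrow> CSim G G' \<Longrightarrow> CSim (DCArg v G) (DCArg v' G')"
| C_fun: "CSim G G' \<Longrightarrow> Sim t t' \<Longrightarrow> CSim (DCFun G t) (DCFun G' t')"

lemma lcat_dplug[simp]: "lcc G \<Longrightarrow> lcat k (dplug G s) = lcat k s"
  by (induction G) (auto intro: lcat_mono)

lemma Sim_val: "Sim v v' \<Longrightarrow> dval v = dval v'"
  by (erule Sim.cases) auto

lemma Sim_CSim_lc:
  shows "Sim a b \<Longrightarrow> lc a \<and> lc b" and "CSim G G' \<Longrightarrow> lcc G \<and> lcc G'"
proof (induction rule: Sim_CSim.inducts)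
  case (S_lam b0 b1)
  then show ?case using lcat_opn_rev[of 0 "FV 0" b0] lcat_opn_rev[of 0 "FV 0" b1] by simp
next
  case (S_shift b0 b1)
  then show ?case using lcat_opn_rev[of 0 "FV 0" b0] lcat_opn_rev[of 0 "FV 0" b1] by simp
next
  case (S_base G G' u u')
  then show ?case by simp
qed simp_all

lemma Sim_lc1: "Sim a b \<Longrightarrow> lc a" and Sim_lc2: "Sim a b \<Longrightarrow> lc b"
  using Sim_CSim_lc by blast+

lemma CSim_lc1: "CSim a b \<Longrightarrow> lcc a" and CSim_lc2: "CSim a b \<Longrightarrow> lcc b"
  using Sim_CSim_lc by blast+

lemma CSim_pure: "CSim G G' \<Longrightarrow> dpure G \<and> dpure G'"
  by (induction rule: Sim_CSim.inducts(2)[where ?P1.0 = "\<lambda>_ _. True"]) (auto dest: Sim_val)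

lemma CSim_arg_inv: "CSim (DCArg v G) G2 \<Longrightarrow> \<exists>v' G'. G2 = DCArg v' G' \<and> Sim v v' \<and> dval v \<and> CSim G G'"
  by (erule CSim.cases) auto
lemma CSim_fun_inv: "CSim (DCFun G t) G2 \<Longrightarrow> \<exists>t' G'. G2 = DCFun G' t' \<and> Sim t t' \<and> CSim G G'"
  by (erule CSim.cases) auto
lemma CSim_hole_inv: "CSim DHole G2 \<Longrightarrow> G2 = DHole"
  by (erule CSim.cases) auto
lemma CSim_reset_inv: "CSim (DCReset G) G2 \<Longrightarrow> False"
  by (erule CSim.cases) auto

lemma Sim_plug: "CSim G G' \<Longrightarrow> Sim u u' \<Longrightarrow> Sim (dplug G u) (dplug G' u')"
proof (induction G arbitrary: G')
  case DHole
  then have "G' = DHole" using CSim_hole_inv by blast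
  then show ?case using DHole by simp
next
  case (DCArg v G)
  then obtain v' G'' where "G' = DCArg v' G''" "Sim v v'" "CSim G G''" using CSim_arg_inv by blast
  then show ?case using DCArg.IH DCArg.prems(2) by (simp add: S_app)
next
  case (DCFun G t)
  then obtain t' G'' where "G' = DCFun G'' t'" "Sim t t'" "CSim G G''" using CSim_fun_inv by blast
  then show ?case using DCFun.IH DCFun.prems(2) by (simp add: S_app)
next
  case (DCReset G)
  then show ?case using CSim_reset_inv by blast
qed

lemma Sim_refl: "lc d \<Longrightarrow> Sim d d"
proof (induction d rule: measure_induct_rule[of size])
  case (less d)
  show ?case
  proof (cases d)
    case (BV n) then show ?thesis using less by simp
  next
    case (FV x) then show ?thesis by (simp add: S_fv)
  next
    case (DLam b)
    have "\<And>z. Sim (opn 0 (FV z) b) (opn 0 (FV z) b)"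
    proof -
      fix z
      have "lc (opn 0 (FV z) b)" using less.prems DLam by (simp add: lcat_opn)
      moreover have "size (opn 0 (FV z) b) < size d" using DLam by simp
      ultimately show "Sim (opn 0 (FV z) b) (opn 0 (FV z) b)" using less.IH by blast
    qed
    then show ?thesis using DLam by (simp add: S_lam)
  next
    case (DShift b)
    have "\<And>z. Sim (opn 0 (FV z) b) (opn 0 (FV z) b)"
    proof -
      fix z
      have "lc (opn 0 (FV z) b)" using less.prems DShift by (simp add: lcat_opn)
      moreover have "size (opn 0 (FV z) b) < size d" using DShift by simp
      ultimately show "Sim (opn 0 (FV z) b) (opn 0 (FV z) b)" using less.IH by blast
    qed
    then show ?thesis using DShift by (simp add: S_shift)
  next
    case (DApp a c)
    then show ?thesis using less by (simp add: S_app)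
  next
    case (DReset a)
    then show ?thesis using less by (simp add: S_reset)
  qed
qed

lemma CSim_refl: "dpure G \<Longrightarrow> lcc G \<Longrightarrow> CSim G G"
  by (induction G) (auto intro: Sim_CSim.intros Sim_refl)

primrec msc :: "(var \<Rightarrow> dt) \<Rightarrow> dctx \<Rightarrow> dctx" where
  "msc s DHole = DHole"
| "msc s (DCArg v E) = DCArg (msubst s v) (msc s E)"
| "msc s (DCFun E t) = DCFun (msc s E) (msubst s t)"
| "msc s (DCReset E) = DCReset (msc s E)"

lemma msubst_dplug[simp]: "msubst s (dplug G u) = dplug (msc s G) (msubst s u)"
  by (induction G) auto

definition simsub :: "(var \<Rightarrow> dt) \<Rightarrow> (var \<Rightarrow> dt) \<Rightarrow> bool" where
  "simsub s0 s1 \<longleftrightarrow> (\<forall>x. Sim (s0 x) (s1 x) \<and> dval (s0 x))"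

lemma simsub_lcs: "simsub s0 s1 \<Longrightarrow> lcs s0 \<and> lcs s1"
  unfolding simsub_def lcs_def using Sim_lc1 Sim_lc2 by blast

lemma simsub_upd: "simsub s0 s1 \<Longrightarrow> simsub (s0(w := FV z)) (s1(w := FV z))"
  unfolding simsub_def by (auto intro: S_fv)

lemma dval_msubst: "dval v \<Longrightarrow> (\<forall>x. dval (s x)) \<Longrightarrow> dval (msubst s v)"
  by (cases v) auto

lemma opn_msubst_fresh:
  assumes "lcs s" "w \<notin> fvd b"
  shows "opn 0 (FV z) (msubst s b) = msubst (s(w := FV z)) (opn 0 (FV w) b)"
proof -
  have "lcs (s(w := FV z))" using assms(1) by (auto simp: lcs_def)
  then have "msubst (s(w := FV z)) (opn 0 (FV w) b) = opn 0 (FV z) (msubst (s(w := FV z)) b)"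
    by (simp add: msubst_opn)
  also have "\<dots> = opn 0 (FV z) (msubst s b)" using assms(2) by (simp add: msubst_upd_notin)
  finally show ?thesis by simp
qed

lemma ex_fresh: "finite S \<Longrightarrow> \<exists>w::var. w \<notin> S"
  using fresh_notin by blast

lemma Sim_msubst:
  shows "Sim a b \<Longrightarrow> simsub s0 s1 \<Longrightarrow> Sim (msubst s0 a) (msubst s1 b)"
    and "CSim G G' \<Longrightarrow> simsub s0 s1 \<Longrightarrow> CSim (msc s0 G) (msc s1 G')"
proof (induction arbitrary: s0 s1 and s0 s1 rule: Sim_CSim.inducts)
  case (S_fv x)
  then show ?case by (simp add: simsub_def)
next
  case (S_lam b0 b1)
  show ?case
  proof (simp, rule Sim_CSim.S_lam)
    fix z
    obtain w where w: "w \<notin> fvd b0 \<union> fvd b1" using ex_fresh[of "fvd b0 \<union> fvd b1"] by auto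
    have l: "lcs s0" "lcs s1" using simsub_lcs S_lam.prems by auto
    show "Sim (opn 0 (FV z) (msubst s0 b0)) (opn 0 (FV z) (msubst s1 b1))"
    proof -
      have "Sim (msubst (s0(w:=FV z)) (opn 0 (FV w) b0)) (msubst (s1(w:=FV z)) (opn 0 (FV w) b1))"
        using S_lam.IH simsub_upd[OF S_lam.prems] by blast
      then show ?thesis using opn_msubst_fresh[OF l(1), of w b0 z] opn_msubst_fresh[OF l(2), of w b1 z] w by simp
    qed
  qed
next
  case (S_shift b0 b1)
  show ?case
  proof (simp, rule Sim_CSim.S_shift)
    fix z
    obtain w where w: "w \<notin> fvd b0 \<union> fvd b1" using ex_fresh[of "fvd b0 \<union> fvd b1"] by auto
    have l: "lcs s0" "lcs s1" using simsub_lcs S_shift.prems by auto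
    show "Sim (opn 0 (FV z) (msubst s0 b0)) (opn 0 (FV z) (msubst s1 b1))"
    proof -
      have "Sim (msubst (s0(w:=FV z)) (opn 0 (FV w) b0)) (msubst (s1(w:=FV z)) (opn 0 (FV w) b1))"
        using S_shift.IH simsub_upd[OF S_shift.prems] by blast
      then show ?thesis using opn_msubst_fresh[OF l(1), of w b0 z] opn_msubst_fresh[OF l(2), of w b1 z] w by simp
    qed
  qed
next
  case (S_base G G' u u')
  then show ?case using Sim_CSim.S_base[of "msc s0 G" "msc s1 G'"] by simp
next
  case (C_arg v v' G G')
  then show ?case by (auto intro!: Sim_CSim.C_arg dval_msubst simp: simsub_def)
qed (auto intro: Sim_CSim.intros)

lemma Sim_inst:
  assumes "\<And>z. Sim (opn 0 (FV z) b0) (opn 0 (FV z) b1)" "Sim W0 W1" "dval W0"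
  shows "Sim (opn 0 W0 b0) (opn 0 W1 b1)"
proof -
  obtain w where w: "w \<notin> fvd b0 \<union> fvd b1" using ex_fresh[of "fvd b0 \<union> fvd b1"] by auto
  have ss: "simsub (FV(w := W0)) (FV(w := W1))"
    using assms(2,3) by (auto simp: simsub_def intro: S_fv)
  have l: "lcs (FV(w := W0))" "lcs (FV(w := W1))" using simsub_lcs[OF ss] by auto
  have "opn 0 W0 b0 = msubst (FV(w := W0)) (opn 0 (FV w) b0)"
    using w l(1) by (simp add: msubst_opn msubst_FV_notin)
  moreover have "opn 0 W1 b1 = msubst (FV(w := W1)) (opn 0 (FV w) b1)"
    using w l(2) by (simp add: msubst_opn msubst_FV_notin)
  ultimately show ?thesis using Sim_msubst(1)[OF assms(1) ss] by simp
qed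



lemma dval_nostep: "dval v \<Longrightarrow> dstep v d \<Longrightarrow> False"
  by (erule dstep.cases) auto

lemma dstep_App_inv: "dstep (DApp a c) d \<Longrightarrow>
   (\<exists>b. a = DLam b \<and> dval c \<and> d = opn 0 c b) \<or> (\<exists>a'. dstep a a' \<and> d = DApp a' c)
   \<or> (dval a \<and> (\<exists>c'. dstep c c' \<and> d = DApp a c'))"
  by (erule dstep.cases) auto

lemma dstep_Reset_inv: "dstep (DReset a) d \<Longrightarrow>
   (dval a \<and> d = a) \<or>
   (\<exists>F b. dpure F \<and> a = dplug F (DShift b) \<and> d = DReset (opn 0 (DLam (DReset (dplug F (BV 0)))) b))
   \<or> (\<exists>a'. dstep a a' \<and> d = DReset a')"
  by (erule dstep.cases) auto

lemma dval_dplug: "dval (dplug G u) \<Longrightarrow> G = DHole"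
  by (cases G) auto

lemma Sim_App_inv1: "Sim (DApp a c) y \<Longrightarrow> \<exists>a' c'. y = DApp a' c' \<and> Sim a a' \<and> Sim c c'"
  by (erule Sim.cases) auto
lemma Sim_App_inv2: "Sim x (DApp a' c') \<Longrightarrow> \<exists>a c. x = DApp a c \<and> Sim a a' \<and> Sim c c'"
  by (erule Sim.cases) auto
lemma Sim_Lam_inv1: "Sim (DLam b) y \<Longrightarrow> \<exists>b'. y = DLam b' \<and> (\<forall>z. Sim (opn 0 (FV z) b) (opn 0 (FV z) b'))"
  by (erule Sim.cases) auto
lemma Sim_Lam_inv2: "Sim x (DLam b') \<Longrightarrow> \<exists>b. x = DLam b \<and> (\<forall>z. Sim (opn 0 (FV z) b) (opn 0 (FV z) b'))"
  by (erule Sim.cases) auto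
lemma Sim_Shift_inv1: "Sim (DShift b) y \<Longrightarrow> \<exists>b'. y = DShift b' \<and> (\<forall>z. Sim (opn 0 (FV z) b) (opn 0 (FV z) b'))"
  by (erule Sim.cases) auto
lemma Sim_Shift_inv2: "Sim x (DShift b') \<Longrightarrow> \<exists>b. x = DShift b \<and> (\<forall>z. Sim (opn 0 (FV z) b) (opn 0 (FV z) b'))"
  by (erule Sim.cases) auto
lemma Sim_FV_inv1: "Sim (FV x) y \<Longrightarrow> y = FV x"
  by (erule Sim.cases) auto
lemma Sim_FV_inv2: "Sim y (FV x) \<Longrightarrow> y = FV x"
  by (erule Sim.cases) auto

lemma decomp_fwd: "dpure F \<Longrightarrow> Sim (dplug F (DShift b)) d1 \<Longrightarrow>
   \<exists>F' b'. d1 = dplug F' (DShift b') \<and> CSim F F' \<and> (\<forall>z. Sim (opn 0 (FV z) b) (opn 0 (FV z) b'))"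
proof (induction F arbitrary: d1)
  case DHole
  then obtain b' where "d1 = DShift b'" "\<forall>z. Sim (opn 0 (FV z) b) (opn 0 (FV z) b')"
    using Sim_Shift_inv1[of b d1] by auto
  then show ?case using C_hole by (intro exI[of _ DHole] exI[of _ b']) auto
next
  case (DCArg v F)
  then obtain a' c' where ac: "d1 = DApp a' c'" "Sim v a'" "Sim (dplug F (DShift b)) c'"
    using Sim_App_inv1 by fastforce
  obtain F' b' where "c' = dplug F' (DShift b')" "CSim F F'" "\<forall>z. Sim (opn 0 (FV z) b) (opn 0 (FV z) b')"
    using DCArg.IH[OF _ ac(3)] DCArg.prems(1) by auto
  then show ?case using ac DCArg.prems(1) by (intro exI[of _ "DCArg a' F'"] exI[of _ b']) (auto intro: C_arg)
next
  case (DCFun F t)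
  then obtain a' c' where ac: "d1 = DApp a' c'" "Sim (dplug F (DShift b)) a'" "Sim t c'"
    using Sim_App_inv1 by fastforce
  obtain F' b' where "a' = dplug F' (DShift b')" "CSim F F'" "\<forall>z. Sim (opn 0 (FV z) b) (opn 0 (FV z) b')"
    using DCFun.IH[OF _ ac(2)] DCFun.prems(1) by auto
  then show ?case using ac by (intro exI[of _ "DCFun F' c'"] exI[of _ b']) (auto intro: C_fun)
next
  case (DCReset F)
  then show ?case by simp
qed

lemma decomp_bwd: "dpure F' \<Longrightarrow> Sim d0 (dplug F' (DShift b')) \<Longrightarrow>
   \<exists>F b. d0 = dplug F (DShift b) \<and> CSim F F' \<and> (\<forall>z. Sim (opn 0 (FV z) b) (opn 0 (FV z) b'))"
proof (induction F' arbitrary: d0)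
  case DHole
  then obtain b where "d0 = DShift b" "\<forall>z. Sim (opn 0 (FV z) b) (opn 0 (FV z) b')"
    using Sim_Shift_inv2[of d0 b'] by auto
  then show ?case using C_hole by (intro exI[of _ DHole] exI[of _ b]) auto
next
  case (DCArg v F')
  then obtain a c where ac: "d0 = DApp a c" "Sim a v" "Sim c (dplug F' (DShift b'))"
    using Sim_App_inv2 by fastforce
  obtain F b where "c = dplug F (DShift b)" "CSim F F'" "\<forall>z. Sim (opn 0 (FV z) b) (opn 0 (FV z) b')"
    using DCArg.IH[OF _ ac(3)] DCArg.prems(1) by auto
  moreover have "dval a" using ac(2) DCArg.prems(1) Sim_val by auto
  ultimately show ?case using ac by (intro exI[of _ "DCArg a F"] exI[of _ b]) (auto intro: C_arg)
next
  case (DCFun F' t)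
  then obtain a c where ac: "d0 = DApp a c" "Sim a (dplug F' (DShift b'))" "Sim c t"
    using Sim_App_inv2 by fastforce
  obtain F b where "a = dplug F (DShift b)" "CSim F F'" "\<forall>z. Sim (opn 0 (FV z) b) (opn 0 (FV z) b')"
    using DCFun.IH[OF _ ac(2)] DCFun.prems(1) by auto
  then show ?case using ac by (intro exI[of _ "DCFun F c"] exI[of _ b]) (auto intro: C_fun)
next
  case (DCReset F)
  then show ?case by simp
qed

lemma shift_sim:
  assumes "CSim F F'" "\<forall>z. Sim (opn 0 (FV z) b) (opn 0 (FV z) b')"
  shows "Sim (DReset (opn 0 (DLam (DReset (dplug F (BV 0)))) b))
             (DReset (opn 0 (DLam (DReset (dplug F' (BV 0)))) b'))"
proof -
  have l: "lcc F" "lcc F'" using assms(1) CSim_lc1 CSim_lc2 by auto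
  have 1: "Sim (opn 0 (FV z) (DReset (dplug F (BV 0)))) (opn 0 (FV z) (DReset (dplug F' (BV 0))))" for z
  proof -
    have "Sim (DReset (dplug F (FV z))) (DReset (dplug F' (FV z)))"
      using Sim_plug[OF assms(1) S_fv] by (rule S_reset)
    then show ?thesis using l by (simp add: opn_dplug)
  qed
  have 2: "Sim (DLam (DReset (dplug F (BV 0)))) (DLam (DReset (dplug F' (BV 0))))"
    using 1 by (rule S_lam)
  have "Sim (opn 0 (DLam (DReset (dplug F (BV 0)))) b) (opn 0 (DLam (DReset (dplug F' (BV 0)))) b')"
    using Sim_inst[of b b', OF _ 2] assms(2) by simp
  then show ?thesis by (rule S_reset)
qed

lemma base_shift_sim:
  assumes "CSim G G'" "CSim F2 F2'" "\<forall>z. Sim (opn 0 (FV z) b) (opn 0 (FV z) b')"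
  shows "Sim (DReset (opn 0 (DLam (DReset (dplug (dcomp G F2) (BV 0)))) b))
    (DReset (opn 0 (DLam (DReset (dplug (DCArg (DLam (dplug G' (BV 0))) F2') (BV 0)))) b'))"
proof -
  have l: "lcc G" "lcc G'" "lcc F2" "lcc F2'" using assms(1,2) CSim_lc1 CSim_lc2 by auto
  have 1: "Sim (opn 0 (FV z) (DReset (dplug (dcomp G F2) (BV 0))))
     (opn 0 (FV z) (DReset (dplug (DCArg (DLam (dplug G' (BV 0))) F2') (BV 0))))" for z
  proof -
    have "Sim (DReset (dplug G (dplug F2 (FV z)))) (DReset (DApp (DLam (dplug G' (BV 0))) (dplug F2' (FV z))))"
      using assms(1) Sim_plug[OF assms(2) S_fv] by (rule S_base)
    then show ?thesis using l by (simp add: opn_dplug)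
  qed
  have 2: "Sim (DLam (DReset (dplug (dcomp G F2) (BV 0)))) (DLam (DReset (dplug (DCArg (DLam (dplug G' (BV 0))) F2') (BV 0))))"
    using 1 by (rule S_lam)
  have "Sim (opn 0 (DLam (DReset (dplug (dcomp G F2) (BV 0)))) b) (opn 0 (DLam (DReset (dplug (DCArg (DLam (dplug G' (BV 0))) F2') (BV 0)))) b')"
    using Sim_inst[of b b', OF _ 2] assms(3) by simp
  then show ?thesis by (rule S_reset)
qed

definition Qr :: "dt \<Rightarrow> bool" where
  "Qr r \<longleftrightarrow> \<not> dval r \<and> (\<forall>a c. r = DApp a c \<longrightarrow> dval a \<and> dval c)"

lemma prefix: "dpure G \<Longrightarrow> \<not> dval u \<Longrightarrow> dplug G u = dplug E r \<Longrightarrow> Qr r \<Longrightarrow> dectx E \<Longrightarrow>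
   \<exists>E2. E = dcomp G E2 \<and> u = dplug E2 r"
proof (induction G arbitrary: E)
  case DHole
  then show ?case by auto
next
  case (DCArg v G)
  show ?case
  proof (cases E)
    case DHole
    then show ?thesis using DCArg.prems dval_dplug[of G u] by (auto simp: Qr_def)
  next
    case (DCArg v' E1)
    note Eeq = this
    then have "v' = v" "dplug G u = dplug E1 r" using DCArg.prems(3) by auto
    then obtain E2 where "E1 = dcomp G E2 \<and> u = dplug E2 r" using DCArg.IH[of E1] DCArg.prems Eeq by auto
    then show ?thesis using \<open>v' = v\<close> DCArg by auto
  next
    case (DCFun E1 t)
    then show ?thesis using DCArg.prems dval_dplug[of E1 r] by (auto simp: Qr_def)
  next
    case (DCReset E1)
    then show ?thesis using DCArg.prems by auto
  qed
next
  case (DCFun G t)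
  show ?case
  proof (cases E)
    case DHole
    then show ?thesis using DCFun.prems dval_dplug[of G u] by (auto simp: Qr_def)
  next
    case (DCArg v' E1)
    then show ?thesis using DCFun.prems dval_dplug[of G u] by auto
  next
    case (DCFun E1 t')
    note Eeq = this
    then have "t' = t" "dplug G u = dplug E1 r" using DCFun.prems(3) by auto
    then obtain E2 where "E1 = dcomp G E2 \<and> u = dplug E2 r" using DCFun.IH[of E1] DCFun.prems Eeq by auto
    then show ?thesis using \<open>t' = t\<close> DCFun by auto
  next
    case (DCReset E1)
    then show ?thesis using DCFun.prems by auto
  qed
next
  case (DCReset G)
  then show ?case by simp
qed

lemma dpure_comp_inv: "dpure (dcomp A B) \<Longrightarrow> dpure B"
  by (induction A) auto
lemma dectx_comp_inv: "dectx (dcomp A B) \<Longrightarrow> dectx B"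
  by (induction A) auto

lemma pure_step_inv: "dpure G \<Longrightarrow> \<not> dval u \<Longrightarrow> dstep (dplug G u) a \<Longrightarrow>
   \<exists>u0. dstep u u0 \<and> a = dplug G u0"
proof (induction G arbitrary: a)
  case DHole
  then show ?case by auto
next
  case (DCArg v G)
  from DCArg.prems(3) have "dstep (DApp v (dplug G u)) a" by simp
  from dstep_App_inv[OF this] show ?case
    using DCArg dval_dplug[of G u] dval_nostep[of v] by auto
next
  case (DCFun G t)
  from DCFun.prems(3) have "dstep (DApp (dplug G u) t) a" by simp
  from dstep_App_inv[OF this] show ?case
    using DCFun dval_dplug[of G u] by auto
next
  case (DCReset G)
  then show ?case by simp
qed

lemma size_dplug: "size (dplug G s) = size (dplug G (BV 0)) + size s"
  by (induction G) auto

lemma tranclp_map: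
  assumes "\<And>x y. dstep x y \<Longrightarrow> dstep (f x) (f y)" "dstep\<^sup>+\<^sup>+ a b"
  shows "dstep\<^sup>+\<^sup>+ (f a) (f b)"
  using assms(2) by (induction rule: tranclp_induct) (auto intro: assms(1) tranclp.trancl_into_trancl)

lemma opn_base: "lcc G' \<Longrightarrow> opn 0 u' (dplug G' (BV 0)) = dplug G' u'"
  by (simp add: opn_dplug)



lemma fwd: "Sim d0 d1 \<Longrightarrow> dstep d0 d0' \<Longrightarrow> \<exists>d1'. dstep\<^sup>+\<^sup>+ d1 d1' \<and> Sim d0' d1'"
proof (induction d1 arbitrary: d0 d0' rule: measure_induct_rule[of size])
  case (less d1)
  from less.prems(1) show ?case
  proof (cases rule: Sim.cases)
    case (S_fv x)
    then show ?thesis using less.prems(2) dval_nostep[of d0 d0'] by auto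
  next
    case (S_lam b0 b1)
    then show ?thesis using less.prems(2) dval_nostep[of d0 d0'] by auto
  next
    case (S_shift b0 b1)
    then show ?thesis using less.prems(2) by (auto elim: dstep.cases)
  next
    case (S_app a a' c c')
    from dstep_App_inv[of a c d0'] less.prems(2) S_app consider
      (beta) b where "a = DLam b" "dval c" "d0' = opn 0 c b"
      | (left) a0 where "dstep a a0" "d0' = DApp a0 c"
      | (right) c0 where "dval a" "dstep c c0" "d0' = DApp a c0" by blast
    then show ?thesis
    proof cases
      case beta
      then obtain b' where b': "a' = DLam b'" "\<forall>z. Sim (opn 0 (FV z) b) (opn 0 (FV z) b')"
        using S_app Sim_Lam_inv1 by blast
      have "dval c'" using beta S_app Sim_val by blast
      then have "dstep d1 (opn 0 c' b')" using S_app b' by (simp add: dbeta)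
      moreover have "Sim d0' (opn 0 c' b')" using beta b' S_app by (simp add: Sim_inst)
      ultimately show ?thesis by blast
    next
      case left
      have "size a' < size d1" using S_app by simp
      with less.IH left S_app obtain a1 where "dstep\<^sup>+\<^sup>+ a' a1" "Sim a0 a1" by blast
      then show ?thesis using S_app left
        by (intro exI[of _ "DApp a1 c'"]) (auto intro: Sim_CSim.S_app tranclp_map[of "\<lambda>x. DApp x c'"] dappL)
    next
      case right
      have "size c' < size d1" using S_app by simp
      with less.IH right S_app obtain c1 where "dstep\<^sup>+\<^sup>+ c' c1" "Sim c0 c1" by blast
      moreover have "dval a'" using right S_app Sim_val by blast
      ultimately show ?thesis using S_app right
        by (intro exI[of _ "DApp a' c1"]) (auto intro: Sim_CSim.S_app tranclp_map[of "\<lambda>x. DApp a' x"] dappR)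
    qed
  next
    case (S_reset a a')
    from dstep_Reset_inv[of a d0'] less.prems(2) S_reset consider
      (val) "dval a" "d0' = a"
      | (shift) F b where "dpure F" "a = dplug F (DShift b)" "d0' = DReset (opn 0 (DLam (DReset (dplug F (BV 0)))) b)"
      | (inner) a0 where "dstep a a0" "d0' = DReset a0" by blast
    then show ?thesis
    proof cases
      case val
      then have "dstep d1 a'" using S_reset Sim_val dreset by blast
      then show ?thesis using val S_reset by blast
    next
      case shift
      then obtain F' b' where F': "a' = dplug F' (DShift b')" "CSim F F'" "\<forall>z. Sim (opn 0 (FV z) b) (opn 0 (FV z) b')"
        using decomp_fwd S_reset by blast
      have "dpure F'" using F' CSim_pure by blast
      then have "dstep d1 (DReset (opn 0 (DLam (DReset (dplug F' (BV 0)))) b'))"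
        using S_reset F' dshift by simp
      then show ?thesis using shift F' shift_sim by blast
    next
      case inner
      have "size a' < size d1" using S_reset by simp
      with less.IH inner S_reset obtain a1 where "dstep\<^sup>+\<^sup>+ a' a1" "Sim a0 a1" by blast
      then show ?thesis using S_reset inner
        by (intro exI[of _ "DReset a1"]) (auto intro: Sim_CSim.S_reset tranclp_map[of DReset] dres)
    qed
  next
    case (S_base G G' u u')
    define W where "W = DLam (dplug G' (BV 0))"
    have lG': "lcc G'" using S_base CSim_lc2 by blast
    have pG: "dpure G" "dpure G'" using S_base CSim_pure by auto
    show ?thesis
    proof (cases "dval u")
      case True
      then have "dval u'" using S_base Sim_val by blast
      then have st: "dstep d1 (DReset (dplug G' u'))"
        using S_base dres[OF dbeta] opn_base[OF lG'] by metis
      have sm: "Sim d0 (DReset (dplug G' u'))" using S_base by (auto intro: Sim_CSim.S_reset Sim_plug)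
      have "size (DReset (dplug G' u')) < size d1"
        using S_base size_dplug[of G' u'] by simp
      with less.IH sm less.prems(2) obtain d1' where "dstep\<^sup>+\<^sup>+ (DReset (dplug G' u')) d1'" "Sim d0' d1'"
        by blast
      then show ?thesis using st by (meson tranclp_into_tranclp2)
    next
      case False
      from dstep_Reset_inv[of "dplug G u" d0'] less.prems(2) S_base consider
        (val) "dval (dplug G u)"
        | (shift) F b where "dpure F" "dplug G u = dplug F (DShift b)" "d0' = DReset (opn 0 (DLam (DReset (dplug F (BV 0)))) b)"
        | (inner) a0 where "dstep (dplug G u) a0" "d0' = DReset a0" by blast
      then show ?thesis
      proof cases
        case val
        then show ?thesis using False dval_dplug by fastforce
      next
        case shift
        have "Qr (DShift b)" by (simp add: Qr_def)
        then obtain F2 where F2: "F = dcomp G F2" "u = dplug F2 (DShift b)"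
          using prefix[OF pG(1) False shift(2)] dpure_dectx[OF shift(1)] by blast
        have pF2: "dpure F2" using shift(1) F2 dpure_comp_inv by blast
        then obtain F2' b' where F2': "u' = dplug F2' (DShift b')" "CSim F2 F2'"
            "\<forall>z. Sim (opn 0 (FV z) b) (opn 0 (FV z) b')"
          using decomp_fwd S_base F2 by blast
        have "dpure (DCArg W F2')" using F2' CSim_pure by (simp add: W_def)
        then have "dstep d1 (DReset (opn 0 (DLam (DReset (dplug (DCArg W F2') (BV 0)))) b'))"
          using S_base F2' dshift[of "DCArg W F2'" b'] by (simp add: W_def)
        moreover have "Sim d0' (DReset (opn 0 (DLam (DReset (dplug (DCArg W F2') (BV 0)))) b'))"
          using base_shift_sim[OF _ F2'(2) F2'(3), of G G'] S_base shift F2 by (simp add: W_def)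
        ultimately show ?thesis by blast
      next
        case inner
        then obtain u0 where u0: "dstep u u0" "a0 = dplug G u0" using pure_step_inv pG False by blast
        have "size u' < size d1" using S_base by simp
        with less.IH u0 S_base obtain u1 where "dstep\<^sup>+\<^sup>+ u' u1" "Sim u0 u1" by blast
        moreover have "dstep\<^sup>+\<^sup>+ (DReset (DApp W u')) (DReset (DApp W u1))"
          by (rule tranclp_map[of "\<lambda>x. DReset (DApp W x)", OF _ \<open>dstep\<^sup>+\<^sup>+ u' u1\<close>])
             (rule dres, rule dappR, simp add: W_def)
        ultimately show ?thesis using S_base inner u0
          by (intro exI[of _ "DReset (DApp W u1)"]) (auto simp: W_def intro: Sim_CSim.S_base)
      qed
    qed
  qed
qed

lemma bwd: "Sim d0 d1 \<Longrightarrow> dstep d1 d1' \<Longrightarrow>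
   (\<exists>d0'. dstep d0 d0' \<and> Sim d0' d1') \<or> (Sim d0 d1' \<and> size d1' < size d1)"
proof (induction arbitrary: d1' rule: Sim_CSim.inducts(1)[where ?P2.0 = "\<lambda>_ _. True"])
  case (S_fv x)
  then show ?case using dval_nostep[of "FV x" d1'] by auto
next
  case (S_lam b0 b1)
  then show ?case using dval_nostep[of "DLam b1" d1'] by auto
next
  case (S_shift b0 b1)
  then show ?case by (auto elim: dstep.cases)
next
  case (S_app a a' c c')
  from dstep_App_inv[of a' c' d1'] S_app.prems consider
    (beta) b' where "a' = DLam b'" "dval c'" "d1' = opn 0 c' b'"
    | (left) a1 where "dstep a' a1" "d1' = DApp a1 c'"
    | (right) c1 where "dval a'" "dstep c' c1" "d1' = DApp a' c1" by blast
  then show ?case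
  proof cases
    case beta
    then obtain b where b: "a = DLam b" "\<forall>z. Sim (opn 0 (FV z) b) (opn 0 (FV z) b')"
      using S_app Sim_Lam_inv2 by blast
    have "dval c" using beta S_app Sim_val by blast
    then show ?thesis using b beta S_app by (intro disjI1 exI[of _ "opn 0 c b"]) (auto intro: dbeta Sim_inst)
  next
    case left
    from S_app.IH(1)[OF left(1)] show ?thesis
    proof
      assume "\<exists>a0. dstep a a0 \<and> Sim a0 a1"
      then show ?thesis using left S_app by (auto intro: dappL Sim_CSim.S_app)
    next
      assume "Sim a a1 \<and> size a1 < size a'"
      then show ?thesis using left S_app by (auto intro: Sim_CSim.S_app)
    qed
  next
    case right
    have "dval a" using right S_app Sim_val by blast
    from S_app.IH(2)[OF right(2)] show ?thesis
    proof
      assume "\<exists>c0. dstep c c0 \<and> Sim c0 c1"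
      then show ?thesis using right S_app \<open>dval a\<close> by (auto intro: dappR Sim_CSim.S_app)
    next
      assume "Sim c c1 \<and> size c1 < size c'"
      then show ?thesis using right S_app by (auto intro: Sim_CSim.S_app)
    qed
  qed
next
  case (S_reset a a')
  from dstep_Reset_inv[of a' d1'] S_reset.prems consider
    (val) "dval a'" "d1' = a'"
    | (shift) F' b' where "dpure F'" "a' = dplug F' (DShift b')" "d1' = DReset (opn 0 (DLam (DReset (dplug F' (BV 0)))) b')"
    | (inner) a1 where "dstep a' a1" "d1' = DReset a1" by blast
  then show ?case
  proof cases
    case val
    then have "dval a" using S_reset Sim_val by blast
    then show ?thesis using val S_reset by (auto intro: dreset)
  next
    case shift
    then obtain F b where F: "a = dplug F (DShift b)" "CSim F F'" "\<forall>z. Sim (opn 0 (FV z) b) (opn 0 (FV z) b')"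
      using decomp_bwd S_reset by blast
    have "dpure F" using F CSim_pure by blast
    then have "dstep (DReset a) (DReset (opn 0 (DLam (DReset (dplug F (BV 0)))) b))"
      using F dshift by simp
    then show ?thesis using shift F shift_sim by blast
  next
    case inner
    from S_reset.IH[OF inner(1)] show ?thesis
    proof
      assume "\<exists>a0. dstep a a0 \<and> Sim a0 a1"
      then show ?thesis using inner by (auto intro: dres Sim_CSim.S_reset)
    next
      assume "Sim a a1 \<and> size a1 < size a'"
      then show ?thesis using inner by (auto intro: Sim_CSim.S_reset)
    qed
  qed
next
  case (S_base G G' u u')
  define W where "W = DLam (dplug G' (BV 0))"
  have lG': "lcc G'" using S_base CSim_lc2 by blast
  have pG: "dpure G" "dpure G'" using S_base CSim_pure by auto
  from dstep_Reset_inv[of "DApp W u'" d1'] S_base.prems consider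
    (val) "dval (DApp W u')"
    | (shift) F' b' where "dpure F'" "DApp W u' = dplug F' (DShift b')" "d1' = DReset (opn 0 (DLam (DReset (dplug F' (BV 0)))) b')"
    | (inner) a1 where "dstep (DApp W u') a1" "d1' = DReset a1" unfolding W_def by blast
  then show ?case
  proof cases
    case val
    then show ?thesis by simp
  next
    case shift
    have "\<exists>F2'. F' = DCArg W F2' \<and> u' = dplug F2' (DShift b')"
    proof (cases F')
      case DHole
      then show ?thesis using shift(2) by simp
    next
      case (DCArg v F2')
      then show ?thesis using shift(2) by auto
    next
      case (DCFun F'' t)
      then have "W = dplug F'' (DShift b')" using shift(2) by simp
      then show ?thesis by (cases F'') (auto simp: W_def)
    next
      case (DCReset F'')
      then show ?thesis using shift(1) by simp
    qed
    then obtain F2' where F2': "F' = DCArg W F2'" "u' = dplug F2' (DShift b')" by blast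
    have "dpure F2'" using shift(1) F2' by simp
    then obtain F2 b where F2: "u = dplug F2 (DShift b)" "CSim F2 F2'" "\<forall>z. Sim (opn 0 (FV z) b) (opn 0 (FV z) b')"
      using decomp_bwd S_base F2' by blast
    have "dpure (dcomp G F2)" using pG F2 CSim_pure dpure_comp by blast
    then have "dstep (DReset (dplug G u)) (DReset (opn 0 (DLam (DReset (dplug (dcomp G F2) (BV 0)))) b))"
      using F2 dshift[of "dcomp G F2" b] by simp
    moreover have "Sim (DReset (opn 0 (DLam (DReset (dplug (dcomp G F2) (BV 0)))) b)) d1'"
      using base_shift_sim[OF S_base(1) F2(2) F2(3)] shift F2' by (simp add: W_def)
    ultimately show ?thesis by blast
  next
    case inner
    from dstep_App_inv[OF inner(1)] consider
      (beta) "dval u'" "a1 = dplug G' u'"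
      | (left) a2 where "dstep W a2"
      | (right) u1 where "dstep u' u1" "a1 = DApp W u1"
      using opn_base[OF lG'] unfolding W_def by auto
    then show ?thesis
    proof cases
      case beta
      have "Sim (DReset (dplug G u)) d1'" using beta inner S_base by (auto intro: Sim_CSim.S_reset Sim_plug)
      moreover have "size d1' < size (DReset (DApp (DLam (dplug G' (BV 0))) u'))"
        using beta inner size_dplug[of G' u'] by simp
      ultimately show ?thesis by blast
    next
      case left
      then show ?thesis using dval_nostep[of W a2] by (simp add: W_def)
    next
      case right
      from S_base.IH[OF right(1)] show ?thesis
      proof
        assume "\<exists>u0. dstep u u0 \<and> Sim u0 u1"
        then obtain u0 where "dstep u u0" "Sim u0 u1" by blast
        then have "dstep (DReset (dplug G u)) (DReset (dplug G u0))"
          using pG dres dstep_ctx dpure_dectx by blast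
        moreover have "Sim (DReset (dplug G u0)) d1'" using right inner S_base \<open>Sim u0 u1\<close>
          by (auto simp: W_def intro: Sim_CSim.S_base)
        ultimately show ?thesis by blast
      next
        assume "Sim u u1 \<and> size u1 < size u'"
        then show ?thesis using right inner S_base by (auto simp: W_def intro: Sim_CSim.S_base)
      qed
    qed
  qed
qed simp_all

lemma fwd_steps: "dstep\<^sup>*\<^sup>* d0 d0' \<Longrightarrow> Sim d0 d1 \<Longrightarrow> \<exists>d1'. dstep\<^sup>*\<^sup>* d1 d1' \<and> Sim d0' d1'"
proof (induction rule: rtranclp_induct)
  case base then show ?case by blast
next
  case (step y z)
  then obtain d1' where "dstep\<^sup>*\<^sup>* d1 d1'" "Sim y d1'" by blast
  with fwd[OF this(2) step(2)] show ?case by (meson rtranclp_trans tranclp_into_rtranclp)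
qed

lemma nf_fwd: "Sim d0 d1 \<Longrightarrow> dirr d0 \<Longrightarrow> \<exists>d1'. dstep\<^sup>*\<^sup>* d1 d1' \<and> Sim d0 d1' \<and> dirr d1'"
proof (induction d1 rule: measure_induct_rule[of size])
  case (less d1)
  show ?case
  proof (cases "dirr d1")
    case True
    then show ?thesis using less by blast
  next
    case False
    then obtain d1'' where st: "dstep d1 d1''" unfolding dirr_def by blast
    from bwd[OF less.prems(1) st] less.prems(2) have "Sim d0 d1'' \<and> size d1'' < size d1"
      unfolding dirr_def by blast
    with less.IH less.prems(2) obtain d1' where "dstep\<^sup>*\<^sup>* d1'' d1'" "Sim d0 d1'" "dirr d1'" by blast
    then show ?thesis using st by (meson converse_rtranclp_into_rtranclp)
  qed
qed

lemma bwd_steps: "dstep\<^sup>*\<^sup>* d1 d1' \<Longrightarrow> Sim d0 d1 \<Longrightarrow> \<exists>d0'. dstep\<^sup>*\<^sup>* d0 d0' \<and> Sim d0' d1'"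
proof (induction arbitrary: d0 rule: converse_rtranclp_induct)
  case base then show ?case by blast
next
  case (step y z)
  from bwd[OF step(4) step(1)] show ?case
  proof
    assume "\<exists>d0'. dstep d0 d0' \<and> Sim d0' z"
    then obtain d0' where "dstep d0 d0'" "Sim d0' z" by blast
    with step(3) show ?thesis by (meson converse_rtranclp_into_rtranclp)
  qed (use step(3) in blast)
qed

lemma irr_bwd: "Sim d0 d1 \<Longrightarrow> dirr d1 \<Longrightarrow> dirr d0"
  unfolding dirr_def using fwd by (metis tranclpD)



lemma nf_class: "lc d \<Longrightarrow> dirr d \<Longrightarrow> \<not> dval d \<Longrightarrow>
  (\<exists>E z v. dectx E \<and> dval v \<and> d = dplug E (DApp (FV z) v)) \<or> (\<exists>F b. dpure F \<and> d = dplug F (DShift b))"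
proof (induction d)
  case (BV n) then show ?case by simp
next
  case (FV x) then show ?case by simp
next
  case (DLam b) then show ?case by simp
next
  case (DShift b)
  then show ?case by (intro disjI2 exI[of _ DHole]) auto
next
  case (DApp a c)
  show ?case
  proof (cases "dval a")
    case False
    have "dirr a" using DApp.prems(2) unfolding dirr_def by (auto intro: dappL)
    with DApp.IH(1) DApp.prems False consider
      (o) E z v where "dectx E" "dval v" "a = dplug E (DApp (FV z) v)"
      | (c) F b where "dpure F" "a = dplug F (DShift b)" by auto
    then show ?thesis
    proof cases
      case o then show ?thesis by (intro disjI1 exI[of _ "DCFun E c"]) auto
    next
      case c then show ?thesis by (intro disjI2 exI[of _ "DCFun F c"]) auto
    qed
  next
    case True
    show ?thesis
    proof (cases "dval c")
      case False
      have "dirr c" using DApp.prems(2) True unfolding dirr_def by (auto intro: dappR)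
      with DApp.IH(2) DApp.prems False consider
        (o) E z v where "dectx E" "dval v" "c = dplug E (DApp (FV z) v)"
        | (c) F b where "dpure F" "c = dplug F (DShift b)" by auto
      then show ?thesis
      proof cases
        case o then show ?thesis using True by (intro disjI1 exI[of _ "DCArg a E"]) auto
      next
        case c then show ?thesis using True by (intro disjI2 exI[of _ "DCArg a F"]) auto
      qed
    next
      case cv: True
      show ?thesis
      proof (cases a)
        case (FV z)
        then show ?thesis using cv by (intro disjI1 exI[of _ DHole]) auto
      next
        case (DLam b)
        then show ?thesis using DApp.prems(2) cv unfolding dirr_def by (auto intro: dbeta)
      qed (use True in auto)
    qed
  qed
next
  case (DReset a)
  have na: "\<not> dval a" using DReset.prems(2) unfolding dirr_def by (auto intro: dreset)
  have "dirr a" using DReset.prems(2) unfolding dirr_def by (auto intro: dres)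
  with DReset.IH DReset.prems na consider
    (o) E z v where "dectx E" "dval v" "a = dplug E (DApp (FV z) v)"
    | (c) F b where "dpure F" "a = dplug F (DShift b)" by auto
  then show ?case
  proof cases
    case o then show ?thesis by (intro disjI1 exI[of _ "DCReset E"]) auto
  next
    case c then show ?thesis using DReset.prems(2) unfolding dirr_def by (auto intro: dshift)
  qed
qed

definition plugrel :: "dctx \<Rightarrow> dctx \<Rightarrow> bool" where
  "plugrel E0 E1 \<longleftrightarrow> (\<forall>s s'. Sim s s' \<longrightarrow> Sim (dplug E0 s) (dplug E1 s'))"

definition ctxrelN :: "dctx \<Rightarrow> dctx \<Rightarrow> bool" where
  "ctxrelN E0 E1 \<longleftrightarrow>
    (\<exists>A0 B0 A1 B1. E0 = dcomp A0 (DCReset B0) \<and> E1 = dcomp A1 (DCReset B1) \<and> dectx A0 \<and> dectx A1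
       \<and> dpure B0 \<and> dpure B1 \<and> plugrel A0 A1 \<and> plugrel (DCReset B0) (DCReset B1))
    \<or> (dpure E0 \<and> dpure E1 \<and> plugrel E0 E1)"

lemma ctxrelN_fun: "ctxrelN E E1 \<Longrightarrow> Sim t t' \<Longrightarrow> ctxrelN (DCFun E t) (DCFun E1 t')"
  unfolding ctxrelN_def
  apply (elim disjE exE conjE)
   apply (rule disjI1)
   apply (rule_tac x="DCFun A0 t" in exI, rule_tac x=B0 in exI, rule_tac x="DCFun A1 t'" in exI, rule_tac x=B1 in exI)
   apply (auto simp: plugrel_def intro: S_app)[1]
  apply (rule disjI2)
  apply (auto simp: plugrel_def intro: S_app)
  done

lemma ctxrelN_arg: "ctxrelN E E1 \<Longrightarrow> Sim v v' \<Longrightarrow> dval v \<Longrightarrow> ctxrelN (DCArg v E) (DCArg v' E1)"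
  using Sim_val[of v v'] unfolding ctxrelN_def
  apply (elim disjE exE conjE)
   apply (rule disjI1)
   apply (rule_tac x="DCArg v A0" in exI, rule_tac x=B0 in exI, rule_tac x="DCArg v' A1" in exI, rule_tac x=B1 in exI)
   apply (auto simp: plugrel_def intro: S_app)[1]
  apply (rule disjI2)
  apply (auto simp: plugrel_def intro: S_app)
  done

lemma ctxrelN_reset: "ctxrelN E E1 \<Longrightarrow> ctxrelN (DCReset E) (DCReset E1)"
  unfolding ctxrelN_def
  apply (elim disjE exE conjE)
   apply (rule disjI1)
   apply (rule_tac x="DCReset A0" in exI, rule_tac x=B0 in exI, rule_tac x="DCReset A1" in exI, rule_tac x=B1 in exI)
   apply (auto simp: plugrel_def intro: S_reset)[1]
  apply (rule disjI1)
  apply (rule_tac x="DHole" in exI, rule_tac x=E in exI, rule_tac x="DHole" in exI, rule_tac x=E1 in exI)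
  apply (auto simp: plugrel_def intro: S_reset)
  done

lemma dcomp_assoc[simp]: "dcomp (dcomp A B) C = dcomp A (dcomp B C)"
  by (induction A) auto

lemma ctxrelN_base:
  assumes "ctxrelN E2 E2'" "CSim G G'"
  shows "ctxrelN (DCReset (dcomp G E2)) (DCReset (DCArg (DLam (dplug G' (BV 0))) E2'))"
proof -
  define W where "W = DLam (dplug G' (BV 0))"
  have pG: "dpure G" "dpure G'" using assms(2) CSim_pure by auto
  have base: "plugrel A0 A1 \<Longrightarrow> plugrel (DCReset (dcomp G A0)) (DCReset (DCArg W A1))" for A0 A1
    unfolding plugrel_def W_def using assms(2) by (auto intro: S_base)
  from assms(1) show ?thesis
    unfolding ctxrelN_def
  proof (elim disjE exE conjE)
    fix A0 B0 A1 B1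
    assume h: "E2 = dcomp A0 (DCReset B0)" "E2' = dcomp A1 (DCReset B1)" "dectx A0" "dectx A1"
      "dpure B0" "dpure B1" "plugrel A0 A1" "plugrel (DCReset B0) (DCReset B1)"
    show "(\<exists>A0 B0 A1 B1. DCReset (dcomp G E2) = dcomp A0 (DCReset B0) \<and>
          DCReset (DCArg (DLam (dplug G' (BV 0))) E2') = dcomp A1 (DCReset B1) \<and>
          dectx A0 \<and> dectx A1 \<and> dpure B0 \<and> dpure B1 \<and> plugrel A0 A1 \<and> plugrel (DCReset B0) (DCReset B1)) \<or>
        dpure (DCReset (dcomp G E2)) \<and> dpure (DCReset (DCArg (DLam (dplug G' (BV 0))) E2')) \<and>
        plugrel (DCReset (dcomp G E2)) (DCReset (DCArg (DLam (dplug G' (BV 0))) E2'))"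
      apply (rule disjI1)
      apply (rule_tac x="DCReset (dcomp G A0)" in exI, rule_tac x=B0 in exI,
             rule_tac x="DCReset (DCArg W A1)" in exI, rule_tac x=B1 in exI)
      using h base[OF h(7)] pG by (auto simp: W_def intro: dectx_comp dpure_dectx)
  next
    assume h: "dpure E2" "dpure E2'" "plugrel E2 E2'"
    show "(\<exists>A0 B0 A1 B1. DCReset (dcomp G E2) = dcomp A0 (DCReset B0) \<and>
          DCReset (DCArg (DLam (dplug G' (BV 0))) E2') = dcomp A1 (DCReset B1) \<and>
          dectx A0 \<and> dectx A1 \<and> dpure B0 \<and> dpure B1 \<and> plugrel A0 A1 \<and> plugrel (DCReset B0) (DCReset B1)) \<or>
        dpure (DCReset (dcomp G E2)) \<and> dpure (DCReset (DCArg (DLam (dplug G' (BV 0))) E2')) \<and>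
        plugrel (DCReset (dcomp G E2)) (DCReset (DCArg (DLam (dplug G' (BV 0))) E2'))"
      apply (rule disjI1)
      apply (rule_tac x="DHole" in exI, rule_tac x="dcomp G E2" in exI,
             rule_tac x="DHole" in exI, rule_tac x="DCArg W E2'" in exI)
      using h base[OF h(3)] pG by (auto simp: W_def plugrel_def intro: dpure_comp)
  qed
qed

lemma Sim_Reset_inv1: "Sim (DReset a) y \<Longrightarrow> (\<exists>a'. y = DReset a' \<and> Sim a a') \<or>
  (\<exists>G G' u u'. a = dplug G u \<and> y = DReset (DApp (DLam (dplug G' (BV 0))) u') \<and> CSim G G' \<and> Sim u u')"
  by (erule Sim.cases) auto

lemma size_dcomp: "size E2 \<le> size (dcomp G E2)"
  by (induction G) auto

lemma stuck_sim: "Sim (dplug E0 (DApp (FV z) v0)) d1 \<Longrightarrow> dectx E0 \<Longrightarrow> dval v0 \<Longrightarrow> dirr d1 \<Longrightarrow>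
  \<exists>E1 v1. d1 = dplug E1 (DApp (FV z) v1) \<and> dectx E1 \<and> Sim v0 v1 \<and> ctxrelN E0 E1"
proof (induction E0 arbitrary: d1 rule: measure_induct_rule[of size])
  case (less E0)
  show ?case
  proof (cases E0)
    case DHole
    then obtain a' v1 where "d1 = DApp a' v1" "Sim (FV z) a'" "Sim v0 v1"
      using less.prems Sim_App_inv1 by fastforce
    then show ?thesis using DHole Sim_FV_inv1
      by (intro exI[of _ DHole] exI[of _ v1]) (auto simp: ctxrelN_def plugrel_def)
  next
    case (DCFun E t)
    then obtain a' t' where a: "d1 = DApp a' t'" "Sim (dplug E (DApp (FV z) v0)) a'" "Sim t t'"
      using less.prems Sim_App_inv1 by fastforce
    have "dirr a'" using less.prems(4) a unfolding dirr_def by (auto intro: dappL)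
    then have "\<exists>E1 v1. a' = dplug E1 (DApp (FV z) v1) \<and> dectx E1 \<and> Sim v0 v1 \<and> ctxrelN E E1"
      using less.IH[of E] a(2) DCFun less.prems(2,3) by simp
    then obtain E1 v1 where "a' = dplug E1 (DApp (FV z) v1)" "dectx E1" "Sim v0 v1" "ctxrelN E E1"
      by blast
    then show ?thesis using a DCFun
      by (intro exI[of _ "DCFun E1 t'"] exI[of _ v1]) (auto intro: ctxrelN_fun)
  next
    case (DCArg v E)
    then obtain v' a' where a: "d1 = DApp v' a'" "Sim v v'" "Sim (dplug E (DApp (FV z) v0)) a'"
      using less.prems Sim_App_inv1 by fastforce
    have dv: "dval v" "dval v'" using DCArg less.prems(2) a Sim_val by auto
    have "dirr a'" using less.prems(4) a dv unfolding dirr_def by (auto intro: dappR)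
    then have "\<exists>E1 v1. a' = dplug E1 (DApp (FV z) v1) \<and> dectx E1 \<and> Sim v0 v1 \<and> ctxrelN E E1"
      using less.IH[of E] a(3) DCArg less.prems(2,3) by simp
    then obtain E1 v1 where "a' = dplug E1 (DApp (FV z) v1)" "dectx E1" "Sim v0 v1" "ctxrelN E E1"
      by blast
    then show ?thesis using a DCArg dv
      by (intro exI[of _ "DCArg v' E1"] exI[of _ v1]) (auto intro: ctxrelN_arg)
  next
    case (DCReset E)
    have "(\<exists>a'. d1 = DReset a' \<and> Sim (dplug E (DApp (FV z) v0)) a') \<or>
      (\<exists>G G' u u'. dplug E (DApp (FV z) v0) = dplug G u \<and> d1 = DReset (DApp (DLam (dplug G' (BV 0))) u')
         \<and> CSim G G' \<and> Sim u u')"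
      using Sim_Reset_inv1[of "dplug E (DApp (FV z) v0)" d1] less.prems(1) DCReset by simp
    then show ?thesis
    proof (elim disjE exE conjE)
      fix a' assume a: "d1 = DReset a'" "Sim (dplug E (DApp (FV z) v0)) a'"
      have "dirr a'" using less.prems(4) a unfolding dirr_def by (auto intro: dres)
      then have "\<exists>E1 v1. a' = dplug E1 (DApp (FV z) v1) \<and> dectx E1 \<and> Sim v0 v1 \<and> ctxrelN E E1"
        using less.IH[of E] a(2) DCReset less.prems(2,3) by simp
      then obtain E1 v1 where "a' = dplug E1 (DApp (FV z) v1)" "dectx E1" "Sim v0 v1" "ctxrelN E E1"
        by blast
      then show ?thesis using a DCReset
        by (intro exI[of _ "DCReset E1"] exI[of _ v1]) (auto intro: ctxrelN_reset)
    next
      fix G G' u u'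
      assume b: "dplug E (DApp (FV z) v0) = dplug G u" "d1 = DReset (DApp (DLam (dplug G' (BV 0))) u')"
        "CSim G G'" "Sim u u'"
      have pG: "dpure G" "dpure G'" using b CSim_pure by auto
      have nu: "\<not> dval u"
      proof
        assume "dval u"
        then have "dval u'" using b Sim_val by blast
        then have "dstep d1 (DReset (opn 0 u' (dplug G' (BV 0))))" using b by (auto intro: dres dbeta)
        then show False using less.prems(4) unfolding dirr_def by blast
      qed
      have "Qr (DApp (FV z) v0)" using less.prems(3) by (simp add: Qr_def)
      then obtain E2 where E2: "E = dcomp G E2" "u = dplug E2 (DApp (FV z) v0)"
        using prefix[OF pG(1) nu b(1)[symmetric]] less.prems(2) DCReset by auto
      have dE2: "dectx E2" using E2 less.prems(2) DCReset dectx_comp_inv by auto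
      have "dirr u'" unfolding dirr_def
      proof
        assume "\<exists>x. dstep u' x"
        then obtain x where "dstep u' x" by blast
        then have "dstep d1 (DReset (DApp (DLam (dplug G' (BV 0))) x))" using b(2) dres[OF dappR[of "DLam (dplug G' (BV 0))" u' x]] by simp
        then show False using less.prems(4) unfolding dirr_def by blast
      qed
      moreover have "size E2 < size E0" using DCReset E2 size_dcomp[of E2 G] by simp
      ultimately have "\<exists>E1 v1. u' = dplug E1 (DApp (FV z) v1) \<and> dectx E1 \<and> Sim v0 v1 \<and> ctxrelN E2 E1"
        using less.IH[of E2] b(4) E2(2) dE2 less.prems(3) by simp
      then obtain E1 v1 where E1: "u' = dplug E1 (DApp (FV z) v1)" "dectx E1" "Sim v0 v1" "ctxrelN E2 E1"
        by blast
      show ?thesis using E1 b E2 DCReset ctxrelN_base[OF E1(4) b(3)]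
        by (intro exI[of _ "DCReset (DCArg (DLam (dplug G' (BV 0))) E1)"] exI[of _ v1]) auto
    qed
  qed
qed



lemma ctx_decomp_reset: "cconv E = dcomp A (DCReset B) \<Longrightarrow>
  \<exists>A' B'. E = ctx_comp A' (CReset B') \<and> cconv A' = A \<and> cconv B' = B"
proof (induction A arbitrary: E)
  case DHole
  then show ?case by (cases E) (auto intro: exI[of _ Hole])
next
  case (DCArg v A)
  then obtain v' E' where E: "E = CArg v' E'" "conv v' = v" "cconv E' = dcomp A (DCReset B)"
    by (cases E) auto
  with DCArg.IH obtain A' B' where "E' = ctx_comp A' (CReset B')" "cconv A' = A" "cconv B' = B" by blast
  then show ?case using E by (intro exI[of _ "CArg v' A'"] exI[of _ B']) auto
next
  case (DCFun A t)
  then obtain t' E' where E: "E = CFun E' t'" "conv t' = t" "cconv E' = dcomp A (DCReset B)"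
    by (cases E) auto
  with DCFun.IH obtain A' B' where "E' = ctx_comp A' (CReset B')" "cconv A' = A" "cconv B' = B" by blast
  then show ?case using E by (intro exI[of _ "CFun A' t'"] exI[of _ B']) auto
next
  case (DCReset A)
  then obtain E' where E: "E = CReset E'" "cconv E' = dcomp A (DCReset B)"
    by (cases E) auto
  with DCReset.IH obtain A' B' where "E' = ctx_comp A' (CReset B')" "cconv A' = A" "cconv B' = B" by blast
  then show ?case using E by (intro exI[of _ "CReset A'"] exI[of _ B']) auto
qed

lemma cconv_comp[simp]: "cconv (ctx_comp A B) = dcomp (cconv A) (cconv B)"
  by (induction A) auto

definition Rc :: "trm \<Rightarrow> trm \<Rightarrow> bool" where "Rc a b \<longleftrightarrow> Sim (conv a) (conv b)"

lemma val_rel_Rc: "Sim (conv v0) (conv v1) \<Longrightarrow> is_value v0 \<Longrightarrow> val_rel Rc v0 v1"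
proof -
  assume s: "Sim (conv v0) (conv v1)" and v: "is_value v0"
  have v1: "is_value v1" using Sim_val[OF s] v by simp
  have "Rc (vapp v0 x) (vapp v1 x)" for x
  proof (cases v0)
    case (Var z)
    then have "v1 = Var z" using s Sim_FV_inv1 conv_FV by fastforce
    then show ?thesis using Var by (simp add: Rc_def Sim_refl)
  next
    case (Lam y b)
    then obtain b' where b': "conv v1 = DLam b'" "\<forall>z. Sim (opn 0 (FV z) (cls 0 y (conv b))) (opn 0 (FV z) b')"
      using s Sim_Lam_inv1 by fastforce
    then obtain y' b2 where "v1 = Lam y' b2" "b' = cls 0 y' (conv b2)" using conv_DLam by blast
    then show ?thesis using Lam b' by (simp add: Rc_def conv_subst_opn)
  qed (use v in auto)
  then show ?thesis using v v1 unfolding val_rel_def by blast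
qed

lemma ctx_rel_Rc: "ctxrelN (cconv E0) (cconv E1) \<Longrightarrow> ctx_rel Rc E0 E1"
  unfolding ctxrelN_def
proof (elim disjE exE conjE)
  fix A0 B0 A1 B1
  assume h: "cconv E0 = dcomp A0 (DCReset B0)" "cconv E1 = dcomp A1 (DCReset B1)" "dectx A0" "dectx A1"
      "dpure B0" "dpure B1" "plugrel A0 A1" "plugrel (DCReset B0) (DCReset B1)"
  obtain A0' B0' where 0: "E0 = ctx_comp A0' (CReset B0')" "cconv A0' = A0" "cconv B0' = B0"
    using ctx_decomp_reset[OF h(1)] by blast
  obtain A1' B1' where 1: "E1 = ctx_comp A1' (CReset B1')" "cconv A1' = A1" "cconv B1' = B1"
    using ctx_decomp_reset[OF h(2)] by blast
  show "ctx_rel Rc E0 E1"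
    unfolding ctx_rel_def
    apply (rule disjI1)
    apply (rule exI[of _ A0'], rule exI[of _ B0'], rule exI[of _ A1'], rule exI[of _ B1'])
    using 0 1 h h(7)[unfolded plugrel_def, rule_format, OF S_fv] h(8)[unfolded plugrel_def, rule_format, OF S_fv]
    by (auto simp: Rc_def)
next
  assume h: "dpure (cconv E0)" "dpure (cconv E1)" "plugrel (cconv E0) (cconv E1)"
  show "ctx_rel Rc E0 E1"
    unfolding ctx_rel_def
    apply (rule disjI2)
    using h h(3)[unfolded plugrel_def, rule_format, OF S_fv] by (auto simp: Rc_def)
qed

lemma ctl_sim:
  assumes "CSim F F'" "\<forall>z. Sim (opn 0 (FV z) b) (opn 0 (FV z) b')"
  shows "Sim (DReset (opn 0 (DLam (cls 0 x (DReset (DApp (FV k') (dplug F (FV x)))))) b))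
             (DReset (opn 0 (DLam (cls 0 x (DReset (DApp (FV k') (dplug F' (FV x)))))) b'))"
proof -
  define D0 where "D0 = DReset (DApp (FV k') (dplug F (FV x)))"
  define D1 where "D1 = DReset (DApp (FV k') (dplug F' (FV x)))"
  have s: "Sim D0 D1" unfolding D0_def D1_def
    by (rule S_reset, rule S_app, rule S_fv, rule Sim_plug[OF assms(1) S_fv])
  have l: "lc D0" "lc D1" using Sim_lc1[OF s] Sim_lc2[OF s] by auto
  have "Sim (opn 0 (FV z) (cls 0 x D0)) (opn 0 (FV z) (cls 0 x D1))" for z
  proof -
    have "simsub (FV(x := FV z)) (FV(x := FV z))" by (simp add: simsub_def S_fv)
    then show ?thesis using Sim_msubst(1)[OF s] l by (simp add: opn_cls)
  qed
  then have "Sim (DLam (cls 0 x D0)) (DLam (cls 0 x D1))" by (rule S_lam)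
  then have "Sim (opn 0 (DLam (cls 0 x D0)) b) (opn 0 (DLam (cls 0 x D1)) b')"
    using Sim_inst[of b b'] assms(2) by simp
  then show ?thesis unfolding D0_def D1_def by (rule S_reset)
qed

lemma rnf_main: "Sim (conv t0) (conv t1) \<Longrightarrow> irreducible t0 \<Longrightarrow> irreducible t1 \<Longrightarrow> rnf Rc t0 t1"
proof -
  assume s: "Sim (conv t0) (conv t1)" and i0: "irreducible t0" and i1: "irreducible t1"
  show ?thesis
  proof (cases "is_value t0")
    case True
    then show ?thesis unfolding rnf_def using val_rel_Rc[OF s] by blast
  next
    case False
    have "dirr (conv t0)" using i0 irr_conv by blast
    from nf_class[OF lc_conv this] False consider
      (o) E z v where "dectx E" "dval v" "conv t0 = dplug E (DApp (FV z) v)"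
      | (c) F b where "dpure F" "conv t0 = dplug F (DShift b)" by auto
    then show ?thesis
    proof cases
      case o
      have "dirr (conv t1)" using i1 irr_conv by blast
      then obtain E1 v1 where E1: "conv t1 = dplug E1 (DApp (FV z) v1)" "dectx E1" "Sim v v1" "ctxrelN E E1"
        using stuck_sim[of E z v "conv t1"] s o by auto
      obtain Er r where r: "t0 = plug Er r" "cconv Er = E" "conv r = DApp (FV z) v" using decomp o(3) by blast
      obtain p q where pq: "r = App p q" "conv p = FV z" "conv q = v" using conv_DApp r(3) by blast
      obtain Er1 r1 where r1: "t1 = plug Er1 r1" "cconv Er1 = E1" "conv r1 = DApp (FV z) v1" using decomp E1(1) by blast
      obtain p1 q1 where pq1: "r1 = App p1 q1" "conv p1 = FV z" "conv q1 = v1" using conv_DApp r1(3) by blast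
      have f1: "p = Var z" "p1 = Var z" using pq pq1 conv_FV by auto
      have f2: "is_ectx Er" "is_ectx Er1" using r r1 o E1 by auto
      have f3: "ctx_rel Rc Er Er1" using ctx_rel_Rc E1(4) r(2) r1(2) by blast
      have f4: "val_rel Rc q q1" using val_rel_Rc E1(3) pq pq1 o(2) by auto
      show ?thesis unfolding rnf_def
        apply (rule disjI2, rule disjI1)
        apply (rule exI[of _ Er], rule exI[of _ Er1], rule exI[of _ z], rule exI[of _ q], rule exI[of _ q1])
        using r r1 pq pq1 f1 f2 f3 f4 by simp
    next
      case c
      then obtain F' b' where F': "conv t1 = dplug F' (DShift b')" "CSim F F'"
          "\<forall>z. Sim (opn 0 (FV z) b) (opn 0 (FV z) b')"
        using decomp_fwd s by metis
      obtain Fr r where r: "t0 = plug Fr r" "cconv Fr = F" "conv r = DShift b" using decomp c(2) by blast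
      obtain k0 s0 where ks: "r = Shift k0 s0" "b = cls 0 k0 (conv s0)" using conv_DShift r(3) by blast
      obtain Fr1 r1 where r1: "t1 = plug Fr1 r1" "cconv Fr1 = F'" "conv r1 = DShift b'" using decomp F'(1) by blast
      obtain k1 s1 where ks1: "r1 = Shift k1 s1" "b' = cls 0 k1 (conv s1)" using conv_DShift r1(3) by blast
      have pF: "is_pure Fr" "is_pure Fr1" using CSim_pure[OF F'(2)] r(2) r1(2) by (metis dpure_cconv)+
      have "Rc (Reset (subst s0 (Lam x (Reset (App (Var k') (plug Fr (Var x))))) k0))
               (Reset (subst s1 (Lam x (Reset (App (Var k') (plug Fr1 (Var x))))) k1))" for k' x
      proof -
        have c0: "conv (Reset (subst s0 (Lam x (Reset (App (Var k') (plug Fr (Var x))))) k0)) =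
          DReset (opn 0 (DLam (cls 0 x (DReset (DApp (FV k') (dplug F (FV x)))))) b)"
          by (simp only: conv.simps conv_subst_opn conv_plug r(2) ks(2))
        have c1: "conv (Reset (subst s1 (Lam x (Reset (App (Var k') (plug Fr1 (Var x))))) k1)) =
          DReset (opn 0 (DLam (cls 0 x (DReset (DApp (FV k') (dplug F' (FV x)))))) b')"
          by (simp only: conv.simps conv_subst_opn conv_plug r1(2) ks1(2))
        show ?thesis unfolding Rc_def c0 c1 by (rule ctl_sim[OF F'(2,3)])
      qed
      note f = this
      show ?thesis unfolding rnf_def
        apply (rule disjI2, rule disjI2)
        apply (rule exI[of _ Fr], rule exI[of _ Fr1], rule exI[of _ k0], rule exI[of _ k1],
               rule exI[of _ s0], rule exI[of _ s1])
        using r r1 ks ks1 pF f by simp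
    qed
  qed
qed

lemma val_rel_conv: "val_rel R b a \<Longrightarrow> val_rel (conversep R) a b"
  unfolding val_rel_def by auto

lemma ctx_rel_conv: assumes "ctx_rel R E0 E1" shows "ctx_rel (conversep R) E1 E0"
  using assms[unfolded ctx_rel_def]
proof (elim disjE exE conjE)
  fix E0' F0 E1' F1
  assume h: "E0 = ctx_comp E0' (CReset F0)" "E1 = ctx_comp E1' (CReset F1)" "is_ectx E0'" "is_ectx E1'"
    "is_pure F0" "is_pure F1"
    "\<forall>x. x \<notin> fv_ctx E0 \<union> fv_ctx E1 \<longrightarrow>
          R (plug E0' (Var x)) (plug E1' (Var x)) \<and> R (Reset (plug F0 (Var x))) (Reset (plug F1 (Var x)))"
  show ?thesis
    unfolding ctx_rel_def
    apply (rule disjI1)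
    apply (rule exI[of _ E1'], rule exI[of _ F1], rule exI[of _ E0'], rule exI[of _ F0])
    using h by auto
next
  assume h: "is_pure E0" "is_pure E1" "\<forall>x. x \<notin> fv_ctx E0 \<union> fv_ctx E1 \<longrightarrow> R (plug E0 (Var x)) (plug E1 (Var x))"
  show ?thesis
    unfolding ctx_rel_def
    apply (rule disjI2)
    using h by auto
qed

lemma rnf_conv: assumes "rnf R b a" shows "rnf (conversep R) a b"
  using assms[unfolded rnf_def]
proof (elim disjE exE conjE)
  assume "val_rel R b a"
  then show ?thesis unfolding rnf_def using val_rel_conv by blast
next
  fix E0 E1 z v0 v1
  assume h: "is_ectx E0" "is_ectx E1" "b = plug E0 (App (Var z) v0)" "a = plug E1 (App (Var z) v1)"
    "ctx_rel R E0 E1" "val_rel R v0 v1"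
  show ?thesis
    unfolding rnf_def
    apply (rule disjI2, rule disjI1)
    apply (rule exI[of _ E1], rule exI[of _ E0], rule exI[of _ z], rule exI[of _ v1], rule exI[of _ v0])
    using h ctx_rel_conv val_rel_conv by blast
next
  fix F0 F1 k0 k1 s0 s1
  assume h: "is_pure F0" "is_pure F1" "b = plug F0 (Shift k0 s0)" "a = plug F1 (Shift k1 s1)"
    "\<forall>k' x. k' \<noteq> x \<longrightarrow> k' \<notin> fv b \<union> fv a \<longrightarrow> x \<notin> fv b \<union> fv a \<longrightarrow>
        R (Reset (subst s0 (Lam x (Reset (App (Var k') (plug F0 (Var x))))) k0))
          (Reset (subst s1 (Lam x (Reset (App (Var k') (plug F1 (Var x))))) k1))"
  show ?thesis
    unfolding rnf_def
    apply (rule disjI2, rule disjI2)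
    apply (rule exI[of _ F1], rule exI[of _ F0], rule exI[of _ k1], rule exI[of _ k0],
           rule exI[of _ s1], rule exI[of _ s0])
    using h by auto
qed

lemma sim_Rc: "refined_sim Rc"
  unfolding refined_sim_def evals_def
proof (intro allI impI, elim conjE)
  fix t0 t1 t0'
  assume r: "Rc t0 t1" and st: "step\<^sup>*\<^sup>* t0 t0'" and irr: "irreducible t0'"
  obtain d1' where d1': "dstep\<^sup>*\<^sup>* (conv t1) d1'" "Sim (conv t0') d1'"
    using fwd_steps[OF proj_steps[OF st]] r unfolding Rc_def by blast
  obtain d1'' where d1'': "dstep\<^sup>*\<^sup>* d1' d1''" "Sim (conv t0') d1''" "dirr d1''"
    using nf_fwd[OF d1'(2)] irr irr_conv by blast
  obtain t1' where t1': "step\<^sup>*\<^sup>* t1 t1'" "conv t1' = d1''"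
    using lift_steps[of t1 d1''] d1'(1) d1''(1) by (meson rtranclp_trans)
  have "irreducible t1'" using t1' d1'' irr_conv by simp
  moreover have "rnf Rc t0' t1'" using rnf_main d1'' t1' irr \<open>irreducible t1'\<close> by simp
  ultimately show "\<exists>t1'. (step\<^sup>*\<^sup>* t1 t1' \<and> irreducible t1') \<and> rnf Rc t0' t1'" using t1' by blast
qed

lemma sim_Rc_conv: "refined_sim (conversep Rc)"
  unfolding refined_sim_def evals_def
proof (intro allI impI, elim conjE)
  fix a b a'
  assume r: "conversep Rc a b" and st: "step\<^sup>*\<^sup>* a a'" and irr: "irreducible a'"
  obtain d0' where d0': "dstep\<^sup>*\<^sup>* (conv b) d0'" "Sim d0' (conv a')"
    using bwd_steps[OF proj_steps[OF st]] r unfolding Rc_def by auto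
  have "dirr d0'" using irr_bwd[OF d0'(2)] irr irr_conv by blast
  obtain b' where b': "step\<^sup>*\<^sup>* b b'" "conv b' = d0'" using lift_steps d0'(1) by blast
  have "irreducible b'" using b' \<open>dirr d0'\<close> irr_conv by simp
  moreover have "rnf Rc b' a'" using rnf_main d0' b' irr \<open>irreducible b'\<close> by simp
  ultimately show "\<exists>b'. (step\<^sup>*\<^sup>* b b' \<and> irreducible b') \<and> rnf (conversep Rc) a' b'"
    using b' rnf_conv by blast
qed

theorem lemma6:
  assumes "is_pure F0" and "is_pure F1"
    and "x \<notin> fv_ctx F0 \<union> fv_ctx F1" and "y \<notin> fv_ctx F1"
  shows "rnf_bisimilar
     (Reset (subst t (Lam x (Reset (plug F1 (plug F0 (Var x))))) k))
     (Reset (subst t (Lam x (Reset (App (Lam y (plug F1 (Var y))) (plug F0 (Var x))))) k))"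
proof -
  define G where "G = cconv F1"
  define U where "U = dplug (cconv F0) (FV x)"
  define D0 where "D0 = DReset (dplug G U)"
  define D1 where "D1 = DReset (DApp (DLam (dplug G (BV 0))) U)"
  have cG: "CSim G G" unfolding G_def using assms(2) by (simp add: CSim_refl)
  have sD: "Sim D0 D1" unfolding D0_def D1_def
    by (rule S_base[OF cG Sim_refl]) (simp add: U_def)
  have lD: "lc D0" "lc D1" using Sim_lc1[OF sD] Sim_lc2[OF sD] by auto
  have K0: "conv (Lam x (Reset (plug F1 (plug F0 (Var x))))) = DLam (cls 0 x D0)"
    by (simp add: D0_def G_def U_def)
  have "cls 0 y (dplug G (FV y)) = dplug G (BV 0)"
    using assms(4) by (simp add: G_def cls_dplug)
  then have K1: "conv (Lam x (Reset (App (Lam y (plug F1 (Var y))) (plug F0 (Var x))))) = DLam (cls 0 x D1)"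
    by (simp add: D1_def G_def U_def)
  have "Sim (opn 0 (FV z) (cls 0 x D0)) (opn 0 (FV z) (cls 0 x D1))" for z
  proof -
    have "simsub (FV(x := FV z)) (FV(x := FV z))" by (simp add: simsub_def S_fv)
    then show ?thesis using Sim_msubst(1)[OF sD] lD by (simp add: opn_cls)
  qed
  then have sK: "Sim (DLam (cls 0 x D0)) (DLam (cls 0 x D1))" by (rule S_lam)
  have ss: "simsub (FV(k := DLam (cls 0 x D0))) (FV(k := DLam (cls 0 x D1)))"
    using sK by (auto simp: simsub_def S_fv)
  have "Rc (Reset (subst t (Lam x (Reset (plug F1 (plug F0 (Var x))))) k))
     (Reset (subst t (Lam x (Reset (App (Lam y (plug F1 (Var y))) (plug F0 (Var x))))) k))"
    unfolding Rc_def conv.simps(5) conv_subst K0 K1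
    by (rule S_reset, rule Sim_msubst(1)[OF Sim_refl[OF lc_conv] ss])
  moreover have "refined_bisim Rc" unfolding refined_bisim_def using sim_Rc sim_Rc_conv by blast
  ultimately show ?thesis unfolding rnf_bisimilar_def by blast
qed

end
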